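(* Let $G$ be a group with a non-elementary action by isometries on a geodesic $\delta$-hyperbolic space $X$, and let $o\in X$ be a base point. For any $0<\epsilon<1$ there exists $C$ such that for any $D$ there is a finite set $S\subseteq G$ of loxodromic elements which is $(\epsilon,C,D)$-Schottky and moreover: (1) the sets $V_C(s^+)$ for distinct $s\in S$ are pairwise disjoint; (2) $so\in V_{C+\delta}(s^+)$ for each $s\in S$.
   Context: Gromov product $(x,y)_z=\frac12(d(x,z)+d(y,z)-d(x,y))$, extended to a boundary point $\xi\in\partial X$ in the standard way via sequences converging to $\xi$. An element $g$ is loxodromic if $\lim_n d(g^no,o)/n>0$; then $g^+\in\partial X$ denotes its attracting fixed point, and $V_C(g^+)=\{x\in X:(x,g^+)_o\ge C\}$. The action is non-elementary if $G$ contains two loxodromic elements with disjoint fixed sets in $\partial X$. A finite set $S$ is $(\epsilon,C,D)$-Schottky if for all $x,y\in X$, $\#\{s\in S:(x,sy)_o\le C\}\ge(1-\epsilon)\#S$ and $\#\{s\in S:(x,s^{-1}y)_o\le C\}\ge(1-\epsilon)\#S$, and $d(o,so)\ge D$ for all $s\in S$. *)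

theory Defs
  imports "HOL-Analysis.Analysis" "HOL-Algebra.Group"
begin

definition gromov_prod :: "'a::metric_space \<Rightarrow> 'a \<Rightarrow> 'a \<Rightarrow> real" where
  "gromov_prod x y z = (dist x z + dist y z - dist x y) / 2"

text \<open>Geodesic metric space (the whole type is the space X).\<close>
definition geodesic_space :: "'a::metric_space itself \<Rightarrow> bool" where
  "geodesic_space _ \<longleftrightarrow> (\<forall>x y::'a. \<exists>\<gamma>::real \<Rightarrow> 'a. \<gamma> 0 = x \<and> \<gamma> (dist x y) = y \<and>
      (\<forall>s\<in>{0..dist x y}. \<forall>t\<in>{0..dist x y}. dist (\<gamma> s) (\<gamma> t) = \<bar>s - t\<bar>))"

definition gromov_hyperbolic :: "'a::metric_space itself \<Rightarrow> real \<Rightarrow> bool" where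
  "gromov_hyperbolic _ \<delta> \<longleftrightarrow> \<delta> \<ge> 0 \<and> (\<forall>x y z w::'a.
      gromov_prod x z w \<ge> min (gromov_prod x y w) (gromov_prod y z w) - \<delta>)"

definition isometric_action :: "('g, 'b) monoid_scheme \<Rightarrow> ('g \<Rightarrow> 'a::metric_space \<Rightarrow> 'a) \<Rightarrow> bool" where
  "isometric_action G \<phi> \<longleftrightarrow> group G \<and> \<phi> \<one>\<^bsub>G\<^esub> = id \<and>
     (\<forall>g\<in>carrier G. \<forall>h\<in>carrier G. \<phi> (g \<otimes>\<^bsub>G\<^esub> h) = \<phi> g \<circ> \<phi> h) \<and>
     (\<forall>g\<in>carrier G. \<forall>x y. dist (\<phi> g x) (\<phi> g y) = dist x y)"

definition gromov_seq :: "'a::metric_space \<Rightarrow> (nat \<Rightarrow> 'a) \<Rightarrow> bool" where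
  "gromov_seq p u \<longleftrightarrow> (\<forall>M. \<exists>N. \<forall>m\<ge>N. \<forall>n\<ge>N. gromov_prod (u m) (u n) p \<ge> M)"

definition seq_equiv :: "'a::metric_space \<Rightarrow> (nat \<Rightarrow> 'a) \<Rightarrow> (nat \<Rightarrow> 'a) \<Rightarrow> bool" where
  "seq_equiv p u v \<longleftrightarrow> (\<forall>M. \<exists>N. \<forall>m\<ge>N. \<forall>n\<ge>N. gromov_prod (u m) (v n) p \<ge> M)"

definition bd_class :: "'a::metric_space \<Rightarrow> (nat \<Rightarrow> 'a) \<Rightarrow> (nat \<Rightarrow> 'a) set" where
  "bd_class p u = {v. gromov_seq p v \<and> seq_equiv p u v}"

definition gromov_boundary :: "'a::metric_space \<Rightarrow> (nat \<Rightarrow> 'a) set set" where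
  "gromov_boundary p = {bd_class p u | u. gromov_seq p u}"

definition gromov_prod_bd :: "'a::metric_space \<Rightarrow> (nat \<Rightarrow> 'a) set \<Rightarrow> 'a \<Rightarrow> ereal" where
  "gromov_prod_bd x \<xi> p = (SUP u\<in>\<xi>. liminf (\<lambda>n. ereal (gromov_prod x (u n) p)))"

definition V_set :: "'a::metric_space \<Rightarrow> real \<Rightarrow> (nat \<Rightarrow> 'a) set \<Rightarrow> 'a set" where
  "V_set p C \<xi> = {x. gromov_prod_bd x \<xi> p \<ge> ereal C}"

definition bd_act :: "('g \<Rightarrow> 'a \<Rightarrow> 'a) \<Rightarrow> 'g \<Rightarrow> (nat \<Rightarrow> 'a) set \<Rightarrow> (nat \<Rightarrow> 'a) set" where
  "bd_act \<phi> g \<xi> = {(\<lambda>n. \<phi> g (u n)) | u. u \<in> \<xi>}"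

definition bd_fixed_set :: "('g \<Rightarrow> 'a::metric_space \<Rightarrow> 'a) \<Rightarrow> 'a \<Rightarrow> 'g \<Rightarrow> (nat \<Rightarrow> 'a) set set" where
  "bd_fixed_set \<phi> p g = {\<xi> \<in> gromov_boundary p. bd_act \<phi> g \<xi> = \<xi>}"

definition loxodromic :: "('g, 'b) monoid_scheme \<Rightarrow> ('g \<Rightarrow> 'a::metric_space \<Rightarrow> 'a) \<Rightarrow> 'a \<Rightarrow> 'g \<Rightarrow> bool" where
  "loxodromic G \<phi> p g \<longleftrightarrow> g \<in> carrier G \<and>
     (\<exists>L>0. (\<lambda>n. dist (\<phi> (g [^]\<^bsub>G\<^esub> n) p) p / real n) \<longlonglongrightarrow> L)"

definition attr_fix :: "('g, 'b) monoid_scheme \<Rightarrow> ('g \<Rightarrow> 'a::metric_space \<Rightarrow> 'a) \<Rightarrow> 'a \<Rightarrow> 'g \<Rightarrow> (nat \<Rightarrow> 'a) set" where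
  "attr_fix G \<phi> p g = bd_class p (\<lambda>n. \<phi> (g [^]\<^bsub>G\<^esub> n) p)"

definition non_elementary :: "('g, 'b) monoid_scheme \<Rightarrow> ('g \<Rightarrow> 'a::metric_space \<Rightarrow> 'a) \<Rightarrow> 'a \<Rightarrow> bool" where
  "non_elementary G \<phi> p \<longleftrightarrow> (\<exists>g\<in>carrier G. \<exists>h\<in>carrier G. loxodromic G \<phi> p g \<and> loxodromic G \<phi> p h \<and>
      bd_fixed_set \<phi> p g \<inter> bd_fixed_set \<phi> p h = {})"

definition schottky :: "('g, 'b) monoid_scheme \<Rightarrow> ('g \<Rightarrow> 'a::metric_space \<Rightarrow> 'a) \<Rightarrow> 'a \<Rightarrow> real \<Rightarrow> real \<Rightarrow> real \<Rightarrow> 'g set \<Rightarrow> bool" where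
  "schottky G \<phi> p \<epsilon> C D S \<longleftrightarrow> finite S \<and> S \<subseteq> carrier G \<and>
     (\<forall>x y. real (card {s\<in>S. gromov_prod x (\<phi> s y) p \<le> C}) \<ge> (1 - \<epsilon>) * real (card S) \<and>
            real (card {s\<in>S. gromov_prod x (\<phi> (inv\<^bsub>G\<^esub> s) y) p \<le> C}) \<ge> (1 - \<epsilon>) * real (card S)) \<and>
     (\<forall>s\<in>S. dist p (\<phi> s p) \<ge> D)"

end

theory Submission
  imports Defs
begin

abbreviation gp where "gp \<equiv> gromov_prod"

lemma gp_sym: "gp x y z = gp y x z"
  unfolding gromov_prod_def by (simp add: dist_commute)

lemma gp_nonneg: "gp x y z \<ge> 0"
  unfolding gromov_prod_def using dist_triangle[of x y z] by (simp add: dist_commute)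

lemma gp_le_dist: "gp x y z \<le> dist x z"
  unfolding gromov_prod_def using dist_triangle[of y z x] by (simp add: dist_commute)

lemma gp_base0: "gp x y x = 0"
  unfolding gromov_prod_def by (simp add: dist_commute)

lemma gp_same: "gp x x z = dist x z"
  unfolding gromov_prod_def by simp

lemma gp_split: "gp y z w + gp y w z = dist w z"
  unfolding gromov_prod_def by (simp add: dist_commute field_simps)

lemma gp_base_change: "gp x y q \<ge> gp x y z - dist z q"
  unfolding gromov_prod_def using dist_triangle[of x z q] dist_triangle[of y z q]
  by (simp add: dist_commute field_simps)

lemma gp_lip1: "gp x z w \<ge> gp y z w - dist x y"
  unfolding gromov_prod_def using dist_triangle[of y w x] dist_triangle[of x z y]
  by (simp add: dist_commute field_simps)

locale hypact = group G for G :: "('g, 'b) monoid_scheme" (structure) +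
  fixes \<phi> :: "'g \<Rightarrow> 'a::metric_space \<Rightarrow> 'a" and p :: 'a and \<delta> :: real
  assumes hyp: "gromov_hyperbolic TYPE('a) \<delta>"
    and act: "isometric_action G \<phi>"
begin

lemma delta_nonneg: "\<delta> \<ge> 0"
  using hyp unfolding gromov_hyperbolic_def by auto

lemma hyp4: "gp (x::'a) z w \<ge> min (gp x y w) (gp y z w) - \<delta>"
  using hyp unfolding gromov_hyperbolic_def by blast

lemma hyp4_3: "gp (x::'a) z w \<ge> min (gp x y w) (min (gp y y' w) (gp y' z w)) - 2 * \<delta>"
proof -
  have "gp y z w \<ge> min (gp y y' w) (gp y' z w) - \<delta>" by (rule hyp4)
  moreover have "gp x z w \<ge> min (gp x y w) (gp y z w) - \<delta>" by (rule hyp4)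
  ultimately show ?thesis using delta_nonneg by linarith
qed

lemma phi_one: "\<phi> \<one> x = x"
  using act unfolding isometric_action_def by simp

lemma phi_mult: "g \<in> carrier G \<Longrightarrow> h \<in> carrier G \<Longrightarrow> \<phi> (g \<otimes> h) x = \<phi> g (\<phi> h x)"
  using act unfolding isometric_action_def by simp

lemma phi_isom: "g \<in> carrier G \<Longrightarrow> dist (\<phi> g x) (\<phi> g y) = dist x y"
  using act unfolding isometric_action_def by simp

lemma phi_inv_l: "g \<in> carrier G \<Longrightarrow> \<phi> (inv g) (\<phi> g x) = x"
  by (metis inv_closed l_inv phi_mult phi_one)

lemma phi_inv_r: "g \<in> carrier G \<Longrightarrow> \<phi> g (\<phi> (inv g) x) = x"
  by (metis inv_closed r_inv phi_mult phi_one)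

lemma gp_isom: "g \<in> carrier G \<Longrightarrow> gp (\<phi> g x) (\<phi> g y) (\<phi> g z) = gp x y z"
  unfolding gromov_prod_def by (simp add: phi_isom)

lemma dist_inv: "g \<in> carrier G \<Longrightarrow> dist p (\<phi> (inv g) p) = dist p (\<phi> g p)"
  by (metis dist_commute phi_inv_r phi_isom inv_closed)

subsection \<open>Chains\<close>

definition chain :: "(nat \<Rightarrow> 'a) \<Rightarrow> nat \<Rightarrow> real \<Rightarrow> real \<Rightarrow> bool" where
  "chain x n A B \<longleftrightarrow> (\<forall>k<n. dist (x k) (x (Suc k)) \<ge> A) \<and>
     (\<forall>k. 0 < k \<and> k < n \<longrightarrow> gp (x (k - 1)) (x (Suc k)) (x k) \<le> B)"

lemma chain_mono: "chain x n A B \<Longrightarrow> m \<le> n \<Longrightarrow> chain x m A B"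
  unfolding chain_def by auto

lemma chain_rev: "chain x n A B \<Longrightarrow> chain (\<lambda>j. x (n - j)) n A B"
  unfolding chain_def
proof safe
  fix k assume h: "\<forall>k<n. A \<le> dist (x k) (x (Suc k))" "k < n"
  then have "A \<le> dist (x (n - Suc k)) (x (Suc (n - Suc k)))" by auto
  moreover have "Suc (n - Suc k) = n - k" using h by auto
  ultimately show "A \<le> dist (x (n - k)) (x (n - Suc k))" by (simp add: dist_commute)
next
  fix k assume h: "\<forall>k. 0 < k \<and> k < n \<longrightarrow> gp (x (k - 1)) (x (Suc k)) (x k) \<le> B" "0 < k" "k < n"
  define j where "j = n - k"
  have j: "0 < j" "j < n" using h unfolding j_def by auto
  then have "gp (x (j - 1)) (x (Suc j)) (x j) \<le> B" using h(1) by auto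
  moreover have "n - (k - 1) = Suc j" "n - Suc k = j - 1" using h unfolding j_def by auto
  ultimately show "gp (x (n - (k - 1))) (x (n - Suc k)) (x (n - k)) \<le> B" unfolding j_def[symmetric] by (simp add: gp_sym)
qed

lemma chainQ:
  assumes c: "chain x n A B" and AB: "A > 2 * B + 3 * \<delta>" and B0: "B \<ge> 0"
  shows "1 \<le> m \<Longrightarrow> m \<le> n \<Longrightarrow> gp (x 0) (x m) (x (m - 1)) \<le> B + \<delta>"
proof (induction m)
  case 0 then show ?case by simp
next
  case (Suc m)
  show ?case
  proof (cases "m = 0")
    case True
    then show ?thesis using gp_sym[of "x 0" "x 1" "x 0"] gp_base0[of "x 0"] B0 delta_nonneg by simp
  next
    case False
    have mm: "m - 1 < n" "Suc (m - 1) = m" using False Suc.prems by auto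
    have d: "dist (x (m - 1)) (x m) \<ge> A" using c mm unfolding chain_def by metis
    have B: "gp (x (m - 1)) (x (Suc m)) (x m) \<le> B" using c Suc.prems False unfolding chain_def by auto
    have IH: "gp (x 0) (x m) (x (m - 1)) \<le> B + \<delta>" using Suc False by auto
    have sp: "gp (x 0) (x (m-1)) (x m) + gp (x 0) (x m) (x (m - 1)) = dist (x m) (x (m-1))"
      by (rule gp_split)
    have h4: "gp (x (m - 1)) (x (Suc m)) (x m) \<ge> min (gp (x (m-1)) (x 0) (x m)) (gp (x 0) (x (Suc m)) (x m)) - \<delta>"
      by (rule hyp4)
    have "gp (x (m-1)) (x 0) (x m) \<ge> A - B - \<delta>" using sp IH d gp_sym[of "x (m-1)" "x 0" "x m"]
      by (simp add: dist_commute)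
    then show ?thesis using h4 B AB delta_nonneg by (simp add: min_def split: if_splits)
  qed
qed

lemma chain_mid:
  assumes c: "chain x n A B" and AB: "A > 2 * B + 3 * \<delta>" and B0: "B \<ge> 0" and k: "0 < k" "k < n"
  shows "gp (x 0) (x n) (x k) \<le> B + 2 * \<delta>"
proof -
  have q1: "gp (x 0) (x (Suc k)) (x k) \<le> B + \<delta>" using chainQ[OF c AB B0, of "Suc k"] k by auto
  have c2: "chain (\<lambda>j. x (n - j)) n A B" by (rule chain_rev[OF c])
  have q2: "gp (x n) (x k) (x (Suc k)) \<le> B + \<delta>" using chainQ[OF c2 AB B0, of "n - k"] k
    by (auto simp: Suc_diff_Suc)
  have d: "dist (x k) (x (Suc k)) \<ge> A" using c k unfolding chain_def by auto
  have sp: "gp (x n) (x (Suc k)) (x k) + gp (x n) (x k) (x (Suc k)) = dist (x k) (x (Suc k))"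
    by (rule gp_split)
  have h4: "gp (x 0) (x (Suc k)) (x k) \<ge> min (gp (x 0) (x n) (x k)) (gp (x n) (x (Suc k)) (x k)) - \<delta>"
    by (rule hyp4)
  show ?thesis using q1 q2 d sp h4 AB delta_nonneg by auto
qed

lemma chain_dist:
  assumes c: "chain x n A B" and AB: "A > 2 * B + 3 * \<delta>" and B0: "B \<ge> 0"
  shows "m \<le> n \<Longrightarrow> dist (x 0) (x m) \<ge> real m * (A - 2 * B - 2 * \<delta>)"
proof (induction m)
  case 0 then show ?case by simp
next
  case (Suc m)
  have q: "gp (x 0) (x (Suc m)) (x m) \<le> B + \<delta>" using chainQ[OF c AB B0, of "Suc m"] Suc by auto
  have d: "dist (x m) (x (Suc m)) \<ge> A" using c Suc unfolding chain_def by auto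
  have e: "dist (x 0) (x (Suc m)) = dist (x 0) (x m) + dist (x m) (x (Suc m)) - 2 * gp (x 0) (x (Suc m)) (x m)"
    unfolding gromov_prod_def by (simp add: dist_commute field_simps)
  show ?case using Suc q d e by (simp add: algebra_simps)
qed

end

context hypact begin

definition wprod :: "'g list \<Rightarrow> 'g" where
  "wprod ls = foldr (\<lambda>x acc. x \<otimes> acc) ls \<one>"

lemma wprod_Nil [simp]: "wprod [] = \<one>" unfolding wprod_def by simp
lemma wprod_Cons [simp]: "wprod (x # xs) = x \<otimes> wprod xs" unfolding wprod_def by simp

lemma wprod_closed [simp]: "set ls \<subseteq> carrier G \<Longrightarrow> wprod ls \<in> carrier G"
  by (induction ls) auto

lemma wprod_append: "set xs \<subseteq> carrier G \<Longrightarrow> set ys \<subseteq> carrier G \<Longrightarrow> wprod (xs @ ys) = wprod xs \<otimes> wprod ys"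
  by (induction xs) (auto simp: m_assoc)

lemma wprod_replicate: "x \<in> carrier G \<Longrightarrow> wprod (replicate n x) = x [^] n"
proof (induction n)
  case (Suc n) then show ?case using nat_pow_Suc2[of x n] by simp
qed simp

lemma wprod_concat_rep: "set W \<subseteq> carrier G \<Longrightarrow> wprod (concat (replicate n W)) = wprod W [^] n"
proof (induction n)
  case 0 then show ?case by simp
next
  case (Suc n)
  have "wprod (concat (replicate (Suc n) W)) = wprod W \<otimes> wprod (concat (replicate n W))"
    using Suc wprod_append[of W "concat (replicate n W)"] by (cases "n = 0") auto
  then show ?case using Suc nat_pow_Suc2[of "wprod W" n] by simp
qed

lemma wprod_rev_inv: "set xs \<subseteq> carrier G \<Longrightarrow> wprod (rev (map (m_inv G) xs)) = inv (wprod xs)"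
proof (induction xs)
  case Nil then show ?case by simp
next
  case (Cons x xs)
  have sc: "set (rev (map (m_inv G) xs)) \<subseteq> carrier G" using Cons by auto
  have "wprod (rev (map (m_inv G) (x # xs))) = wprod (rev (map (m_inv G) xs)) \<otimes> wprod [inv x]"
    using wprod_append[OF sc, of "[inv x]"] Cons by simp
  also have "\<dots> = inv (wprod xs) \<otimes> inv x" using Cons by simp
  also have "\<dots> = inv (x \<otimes> wprod xs)" using Cons by (simp add: inv_mult_group)
  finally show ?case by simp
qed

definition pts :: "'g list \<Rightarrow> nat \<Rightarrow> 'a" where
  "pts ls k = \<phi> (wprod (take k ls)) p"

lemma pts_0 [simp]: "pts ls 0 = p" unfolding pts_def by (simp add: phi_one)

lemma pts_Suc: "k < length ls \<Longrightarrow> set ls \<subseteq> carrier G \<Longrightarrow>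
    pts ls (Suc k) = \<phi> (wprod (take k ls)) (\<phi> (ls ! k) p)"
proof -
  assume k: "k < length ls" and c: "set ls \<subseteq> carrier G"
  have t: "set (take k ls) \<subseteq> carrier G" using c by (meson order_trans set_take_subset)
  have lk: "ls ! k \<in> carrier G" using c k by auto
  have "wprod (take (Suc k) ls) = wprod (take k ls) \<otimes> (ls ! k)"
    using k t lk by (simp add: take_Suc_conv_app_nth wprod_append)
  then show ?thesis unfolding pts_def using t lk by (simp add: phi_mult)
qed

lemma pts_len_app: "pts (M @ R) (length M) = \<phi> (wprod M) p"
  unfolding pts_def by simp

lemma pts_len: "pts M (length M) = \<phi> (wprod M) p"
  unfolding pts_def by simp

lemma pts_take: "k \<le> n \<Longrightarrow> pts (take n ls) k = pts ls k"
  unfolding pts_def by (simp add: min_def)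

definition alph :: "'g set \<Rightarrow> real \<Rightarrow> real \<Rightarrow> bool" where
  "alph \<Sigma> A B \<longleftrightarrow> \<Sigma> \<subseteq> carrier G \<and> (\<forall>x\<in>\<Sigma>. inv x \<in> \<Sigma>) \<and> (\<forall>x\<in>\<Sigma>. A \<le> dist p (\<phi> x p)) \<and>
     (\<forall>x\<in>\<Sigma>. \<forall>y\<in>\<Sigma>. x \<noteq> y \<longrightarrow> gp (\<phi> x p) (\<phi> y p) p \<le> B) \<and> 2 * B + 3 * \<delta> < A \<and> 0 \<le> B"

definition red :: "'g set \<Rightarrow> 'g list \<Rightarrow> bool" where
  "red \<Sigma> L \<longleftrightarrow> set L \<subseteq> \<Sigma> \<and> successively (\<lambda>x y. y \<noteq> inv x) L"

lemma red_append: "red \<Sigma> (xs @ ys) \<longleftrightarrow> red \<Sigma> xs \<and> red \<Sigma> ys \<and> (xs = [] \<or> ys = [] \<or> hd ys \<noteq> inv (last xs))"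
  unfolding red_def by (auto simp: successively_append_iff)

lemma red_rev_inv:
  assumes "alph \<Sigma> A B" "red \<Sigma> xs"
  shows "red \<Sigma> (rev (map (m_inv G) xs))"
proof -
  have c: "\<Sigma> \<subseteq> carrier G" "\<forall>x\<in>\<Sigma>. inv x \<in> \<Sigma>" using assms(1) unfolding alph_def by auto
  have s: "set xs \<subseteq> \<Sigma>" "successively (\<lambda>x y. y \<noteq> inv x) xs" using assms(2) unfolding red_def by auto
  have "successively (\<lambda>x y. inv x \<noteq> inv (inv y)) xs"
    using s(2) proof (rule successively_mono)
    fix x y assume "x \<in> set xs" "y \<in> set xs" "y \<noteq> inv x"
    then show "inv x \<noteq> inv (inv y)" using s(1) c(1) by (metis inv_inv subsetD)
  qed
  then have "successively (\<lambda>x y. y \<noteq> inv x) (rev (map (m_inv G) xs))"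
    by (simp add: successively_map)
  moreover have "set (rev (map (m_inv G) xs)) \<subseteq> \<Sigma>" using s(1) c(2) by auto
  ultimately show ?thesis unfolding red_def by simp
qed

lemma word_chain:
  assumes a: "alph \<Sigma> A B" and r: "red \<Sigma> L"
  shows "chain (pts L) (length L) A B"
proof -
  have c: "\<Sigma> \<subseteq> carrier G" "\<forall>x\<in>\<Sigma>. inv x \<in> \<Sigma>" "\<forall>x\<in>\<Sigma>. A \<le> dist p (\<phi> x p)"
    "\<forall>x\<in>\<Sigma>. \<forall>y\<in>\<Sigma>. x \<noteq> y \<longrightarrow> gp (\<phi> x p) (\<phi> y p) p \<le> B" using a unfolding alph_def by auto
  have s: "set L \<subseteq> \<Sigma>" "successively (\<lambda>x y. y \<noteq> inv x) L" using r unfolding red_def by auto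
  have sc: "set L \<subseteq> carrier G" using s c by auto
  have tc: "\<And>k. set (take k L) \<subseteq> carrier G" using sc by (meson order_trans set_take_subset)
  show ?thesis unfolding chain_def
  proof safe
    fix k assume k: "k < length L"
    have "dist (pts L k) (pts L (Suc k)) = dist (\<phi> (wprod (take k L)) p) (\<phi> (wprod (take k L)) (\<phi> (L ! k) p))"
      using pts_Suc[OF k sc] unfolding pts_def by simp
    also have "\<dots> = dist p (\<phi> (L ! k) p)" using tc by (simp add: phi_isom)
    moreover have "L ! k \<in> \<Sigma>" using s(1) k by (meson nth_mem subsetD)
    ultimately show "A \<le> dist (pts L k) (pts L (Suc k))" using c(3) by auto
  next
    fix k assume k: "0 < k" "k < length L"
    define j where "j = k - 1"
    have kj: "k = Suc j" using k unfolding j_def by auto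
    define W where "W = wprod (take j L)"
    define u where "u = L ! j"
    define v where "v = L ! k"
    have uS: "u \<in> \<Sigma>" "v \<in> \<Sigma>" using s(1) k unfolding u_def v_def kj by auto
    have uc: "u \<in> carrier G" "v \<in> carrier G" "W \<in> carrier G" using uS c tc unfolding W_def by auto
    have neq: "v \<noteq> inv u" using successively_nth[OF s(2), of j] k unfolding u_def v_def kj by auto
    have p1: "pts L (k - 1) = \<phi> W p" unfolding j_def[symmetric] W_def pts_def by simp
    have p2: "pts L k = \<phi> W (\<phi> u p)" unfolding kj W_def u_def using pts_Suc[of j L] k kj sc by simp
    have wk: "wprod (take k L) = W \<otimes> u" unfolding kj W_def u_def
      using k kj tc uc by (simp add: take_Suc_conv_app_nth wprod_append u_def)
    have p3: "pts L (Suc k) = \<phi> W (\<phi> u (\<phi> v p))"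
      using pts_Suc[of k L] k sc wk uc unfolding v_def by (simp add: phi_mult)
    have "gp (pts L (k - 1)) (pts L (Suc k)) (pts L k) = gp p (\<phi> u (\<phi> v p)) (\<phi> u p)"
      unfolding p1 p2 p3 using uc by (simp add: gp_isom)
    also have "\<dots> = gp (\<phi> u (\<phi> (inv u) p)) (\<phi> u (\<phi> v p)) (\<phi> u p)" using uc by (simp add: phi_inv_r)
    also have "\<dots> = gp (\<phi> (inv u) p) (\<phi> v p) p" using uc by (simp add: gp_isom)
    also have "\<dots> \<le> B" using c(4) c(2) uS neq by (metis)
    finally show "gp (pts L (k - 1)) (pts L (Suc k)) (pts L k) \<le> B" .
  qed
qed

lemma alph_AB: "alph \<Sigma> A B \<Longrightarrow> 2 * B + 3 * \<delta> < A \<and> 0 \<le> B"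
  unfolding alph_def by auto

lemma word_mid:
  assumes a: "alph \<Sigma> A B" and r: "red \<Sigma> L" and k: "0 < k" "k < m" "m \<le> length L"
  shows "gp p (pts L m) (pts L k) \<le> B + 2 * \<delta>"
proof -
  have "chain (pts L) m A B" using chain_mono[OF word_chain[OF a r] k(3)] .
  from chain_mid[OF this] alph_AB[OF a] k show ?thesis by auto
qed

lemma word_dist:
  assumes a: "alph \<Sigma> A B" and r: "red \<Sigma> L" and m: "m \<le> length L"
  shows "dist p (pts L m) \<ge> real m * (A - 2 * B - 2 * \<delta>)"
  using chain_dist[OF word_chain[OF a r]] alph_AB[OF a] m by auto

lemma word_pref:
  assumes a: "alph \<Sigma> A B" and r: "red \<Sigma> L" and k: "k \<le> m" "m \<le> length L"
  shows "gp (pts L k) (pts L m) p \<ge> dist p (pts L k) - (B + 2 * \<delta>)"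
proof (cases "k = 0")
  case True
  then show ?thesis using alph_AB[OF a] delta_nonneg gp_nonneg[of p "pts L m" p] by simp
next
  case False
  show ?thesis
  proof (cases "k = m")
    case True
    then show ?thesis using alph_AB[OF a] delta_nonneg by (simp add: gp_same dist_commute)
  next
    case False
    then have "0 < k" "k < m" using k \<open>k \<noteq> 0\<close> by auto
    then have "gp p (pts L m) (pts L k) \<le> B + 2 * \<delta>" using word_mid[OF a r] k by auto
    moreover have "gp (pts L m) (pts L k) p + gp (pts L m) p (pts L k) = dist p (pts L k)"
      by (rule gp_split)
    ultimately show ?thesis by (simp add: gp_sym)
  qed
qed

lemma word_upper:
  assumes c: "\<Sigma> \<subseteq> carrier G" and lm: "\<forall>x\<in>\<Sigma>. dist p (\<phi> x p) \<le> Lm" and s: "set L \<subseteq> \<Sigma>"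
  shows "dist p (\<phi> (wprod L) p) \<le> real (length L) * Lm"
  using s
proof (induction L)
  case Nil then show ?case by (simp add: phi_one)
next
  case (Cons x L)
  have xc: "x \<in> carrier G" "wprod L \<in> carrier G" using Cons c by auto
  have "dist p (\<phi> (wprod (x # L)) p) = dist p (\<phi> x (\<phi> (wprod L) p))" using xc by (simp add: phi_mult)
  also have "\<dots> \<le> dist p (\<phi> x p) + dist (\<phi> x p) (\<phi> x (\<phi> (wprod L) p))" by (rule dist_triangle)
  also have "\<dots> = dist p (\<phi> x p) + dist p (\<phi> (wprod L) p)" using xc by (simp add: phi_isom)
  also have "\<dots> \<le> Lm + real (length L) * Lm" using Cons lm by (intro add_mono) auto
  finally show ?case by (simp add: algebra_simps)
qed

lemma word_branch:
  assumes a: "alph \<Sigma> A B" and lm: "\<forall>x\<in>\<Sigma>. dist p (\<phi> x p) \<le> Lm"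
    and r1: "red \<Sigma> (w @ l # r1)" and r2: "red \<Sigma> (w @ l' # r2)" and ll: "l \<noteq> l'"
  shows "gp (\<phi> (wprod (w @ l # r1)) p) (\<phi> (wprod (w @ l' # r2)) p) p \<le> real (length w) * Lm + B + 2 * \<delta>"
proof -
  have c: "\<Sigma> \<subseteq> carrier G" "\<forall>x\<in>\<Sigma>. inv x \<in> \<Sigma>" using a unfolding alph_def by auto
  have ws: "set w \<subseteq> \<Sigma>" "set (l # r1) \<subseteq> \<Sigma>" "set (l' # r2) \<subseteq> \<Sigma>" using r1 r2 unfolding red_def by auto
  have wc: "set w \<subseteq> carrier G" "set (l # r1) \<subseteq> carrier G" "set (l' # r2) \<subseteq> carrier G" using ws c by auto
  define W where "W = wprod w"
  define U where "U = wprod (l # r1)"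
  define V where "V = wprod (l' # r2)"
  have Wc: "W \<in> carrier G" "U \<in> carrier G" "V \<in> carrier G" unfolding W_def U_def V_def using wc by auto
  have e1: "\<phi> (wprod (w @ l # r1)) p = \<phi> W (\<phi> U p)" unfolding W_def U_def
    using wc by (simp add: wprod_append phi_mult del: wprod_Cons)
  have e2: "\<phi> (wprod (w @ l' # r2)) p = \<phi> W (\<phi> V p)" unfolding W_def V_def
    using wc by (simp add: wprod_append phi_mult del: wprod_Cons)
  have "gp (\<phi> W (\<phi> U p)) (\<phi> W (\<phi> V p)) p \<le> gp (\<phi> W (\<phi> U p)) (\<phi> W (\<phi> V p)) (\<phi> W p) + dist p (\<phi> W p)"
    using gp_base_change[of "\<phi> W (\<phi> U p)" "\<phi> W (\<phi> V p)" p "\<phi> W p"] by linarith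
  also have "gp (\<phi> W (\<phi> U p)) (\<phi> W (\<phi> V p)) (\<phi> W p) = gp (\<phi> U p) (\<phi> V p) p"
    using Wc by (simp add: gp_isom)
  finally have st1: "gp (\<phi> W (\<phi> U p)) (\<phi> W (\<phi> V p)) p \<le> gp (\<phi> U p) (\<phi> V p) p + dist p (\<phi> W p)" .
  have dW: "dist p (\<phi> W p) \<le> real (length w) * Lm" unfolding W_def using word_upper[OF c(1) lm ws(1)] .
  define M where "M = rev (map (m_inv G) (l # r1)) @ (l' # r2)"
  have rr1: "red \<Sigma> (l # r1)" using r1 red_append by blast
  have rr2: "red \<Sigma> (l' # r2)" using r2 red_append by blast
  have lc: "l \<in> carrier G" using wc by auto
  have rM: "red \<Sigma> M" unfolding M_def red_append
    using red_rev_inv[OF a rr1] rr2 ll lc by (simp add: last_rev)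
  define m1 where "m1 = length (l # r1)"
  have Mc: "set (rev (map (m_inv G) (l # r1))) \<subseteq> carrier G" using wc by auto
  have pm1: "pts M m1 = \<phi> (inv U) p" unfolding M_def m1_def U_def
    using pts_len_app[of "rev (map (m_inv G) (l # r1))" "l' # r2"] wprod_rev_inv[OF wc(2)] by simp
  have pM: "pts M (length M) = \<phi> (inv U) (\<phi> V p)" unfolding pts_len M_def U_def V_def
    using wprod_append[OF Mc wc(3)] wprod_rev_inv[OF wc(2)] wc by (simp add: phi_mult del: wprod_Cons)
  have "gp p (pts M (length M)) (pts M m1) \<le> B + 2 * \<delta>"
    using word_mid[OF a rM, of m1 "length M"] unfolding m1_def M_def by simp
  then have "gp (\<phi> U p) (\<phi> V p) p \<le> B + 2 * \<delta>" unfolding pm1 pM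
    using gp_isom[of U p "\<phi> (inv U) (\<phi> V p)" "\<phi> (inv U) p"] Wc by (simp add: phi_inv_r)
  then show ?thesis using st1 dW e1 e2 by simp
qed

end

lemma lin_limit:
  fixes f :: "nat \<Rightarrow> real"
  assumes sub: "\<And>k m. f (k + m) \<le> f k + f m"
    and sup: "\<And>k m. f (k + m) \<ge> f k + f m - c"
    and lo: "\<And>k. f k \<ge> real k * \<gamma>" and g: "\<gamma> > 0"
  shows "\<exists>L>0. (\<lambda>k. f k / real k) \<longlonglongrightarrow> L"
proof -
  have c0: "c \<ge> 0" using sup[of 0 0] lo[of 0] by simp
  have up: "f (k * Suc m) \<le> real (Suc m) * f k" for k m
  proof (induction m)
    case 0 then show ?case by simp
  next
    case (Suc m)
    have "f (k * Suc (Suc m)) = f (k * Suc m + k)" by (simp add: algebra_simps)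
    also have "\<dots> \<le> f (k * Suc m) + f k" by (rule sub)
    finally show ?case using Suc by (simp add: algebra_simps)
  qed
  have dn: "f (k * Suc m) \<ge> real (Suc m) * f k - real m * c" for k m
  proof (induction m)
    case 0 then show ?case by simp
  next
    case (Suc m)
    have "f (k * Suc (Suc m)) = f (k * Suc m + k)" by (simp add: algebra_simps)
    also have "\<dots> \<ge> f (k * Suc m) + f k - c" by (rule sup)
    finally show ?case using Suc by (simp add: algebra_simps)
  qed
  define a where "a k = f k / real k" for k
  have near: "\<bar>a (k * m) - a k\<bar> \<le> c / real k" if k: "k \<ge> 1" and m: "m \<ge> 1" for k m
  proof -
    obtain m' where m': "m = Suc m'" using m by (cases m) auto
    have kp: "real k > 0" using k by simp
    have e1: "a (k * m) = f (k * m) / (real k * real m)" unfolding a_def by simp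
    have u: "f (k * m) \<le> real m * f k" using up[where k=k and m=m'] m' by simp
    have d: "f (k * m) \<ge> real m * f k - real m * c" using dn[where k=k and m=m'] m' c0
      by (simp add: algebra_simps) 
    have mp: "real m > 0" using m by simp
    have "a (k * m) \<le> a k" unfolding e1 a_def using u kp mp by (simp add: field_simps)
    moreover have "a (k * m) \<ge> a k - c / real k"
    proof -
      have "f (k * m) / (real k * real m) \<ge> (real m * f k - real m * c) / (real k * real m)"
        using d kp mp by (intro divide_right_mono) auto
      moreover have "(real m * f k - real m * c) / (real k * real m) = a k - c / real k"
        unfolding a_def using kp mp by (simp add: field_simps)
      ultimately show ?thesis unfolding e1 by simp
    qed
    ultimately show ?thesis by simp
  qed
  have "Cauchy a"
  proof (rule CauchyI)
    fix e :: real assume e: "0 < e"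
    obtain M0 :: nat where M0: "real M0 > 2 * c / e" using reals_Archimedean2 by blast
    define M where "M = max 1 M0"
    have M: "real M > 2 * c / e" "M \<ge> 1" using M0 unfolding M_def by auto
    have Mp: "real M > 0" using M by simp
    have cM: "2 * c / real M < e" using M e Mp by (simp add: field_simps)
    show "\<exists>M. \<forall>m\<ge>M. \<forall>n\<ge>M. norm (a m - a n) < e"
    proof (intro exI allI impI)
      fix m n assume mn: "M \<le> m" "M \<le> n"
      have m1: "m \<ge> 1" "n \<ge> 1" using mn M by auto
      have h1: "\<bar>a (m * n) - a m\<bar> \<le> c / real m" using near m1 by simp
      have h2: "\<bar>a (m * n) - a n\<bar> \<le> c / real n" using near[of n m] m1 by (simp add: mult.commute)
      have "c / real m \<le> c / real M" using mn c0 Mp by (simp add: frac_le)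
      moreover have "c / real n \<le> c / real M" using mn c0 Mp by (simp add: frac_le)
      moreover have "\<bar>a m - a n\<bar> \<le> \<bar>a (m * n) - a m\<bar> + \<bar>a (m * n) - a n\<bar>" by arith
      moreover have "2 * c / real M = c / real M + c / real M" by simp
      ultimately have "\<bar>a m - a n\<bar> \<le> 2 * c / real M" using h1 h2 by linarith
      then show "norm (a m - a n) < e" using cM by simp
    qed
  qed
  then have "a \<longlonglongrightarrow> lim a" by (simp add: Cauchy_convergent_iff convergent_LIMSEQ_iff)
  moreover have "\<gamma> \<le> lim a"
  proof (rule LIMSEQ_le_const[OF \<open>a \<longlonglongrightarrow> lim a\<close>])
    show "\<exists>N. \<forall>n\<ge>N. \<gamma> \<le> a n"
    proof (intro exI allI impI)
      fix n :: nat assume "1 \<le> n"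
      then show "\<gamma> \<le> a n" unfolding a_def using lo[of n] by (simp add: field_simps)
    qed
  qed
  ultimately have "lim a > 0" "a \<longlonglongrightarrow> lim a" using g by auto
  then show ?thesis unfolding a_def by blast
qed


context hypact begin

lemma concat_rep_add: "concat (replicate (k + m) W) = concat (replicate k W) @ concat (replicate m W)"
  by (simp add: replicate_add)

lemma length_concat_rep: "length (concat (replicate k W)) = k * length W"
  by (induction k) auto

lemma red_concat_rep:
  assumes r: "red \<Sigma> (W @ W)" and ne: "W \<noteq> []"
  shows "red \<Sigma> (concat (replicate k W))"
proof (induction k)
  case 0 then show ?case by (simp add: red_def)
next
  case (Suc k)
  have rW: "red \<Sigma> W" and j: "hd W \<noteq> inv (last W)" using r ne red_append by auto
  have "hd (concat (replicate k W)) = hd W" if "k > 0" using that ne by (cases k) auto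
  then show ?case using Suc rW j red_append[of \<Sigma> W "concat (replicate k W)"] ne by auto
qed

lemma pow_sub:
  assumes z: "z \<in> carrier G"
  shows "dist p (\<phi> (z [^] ((k::nat) + m)) p) \<le> dist p (\<phi> (z [^] k) p) + dist p (\<phi> (z [^] m) p)"
proof -
  have "z [^] (k + m) = z [^] k \<otimes> z [^] m" using z by (simp add: nat_pow_mult)
  then have "\<phi> (z [^] (k + m)) p = \<phi> (z [^] k) (\<phi> (z [^] m) p)" using z by (simp add: phi_mult)
  then have "dist p (\<phi> (z [^] (k + m)) p) \<le> dist p (\<phi> (z [^] k) p) + dist (\<phi> (z [^] k) p) (\<phi> (z [^] k) (\<phi> (z [^] m) p))"
    using dist_triangle by simp
  then show ?thesis using z by (simp add: phi_isom)
qed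

lemma comm_pow:
  assumes "g \<in> carrier G" "x \<in> carrier G" "g \<otimes> x = x \<otimes> g"
  shows "g \<otimes> x [^] (K::nat) = x [^] K \<otimes> g"
proof (induction K)
  case 0 then show ?case using assms by simp
next
  case (Suc K)
  have "g \<otimes> x [^] Suc K = (g \<otimes> x [^] K) \<otimes> x" using assms by (simp add: m_assoc)
  also have "\<dots> = x [^] K \<otimes> (g \<otimes> x)" using Suc assms by (simp add: m_assoc)
  also have "\<dots> = x [^] Suc K \<otimes> g" using assms by (simp add: m_assoc)
  finally show ?case .
qed

lemma comm_inv:
  assumes g: "g \<in> carrier G" and x: "x \<in> carrier G" and c: "g \<otimes> x = x \<otimes> g"
  shows "g \<otimes> inv x = inv x \<otimes> g"
proof -
  have "inv x \<otimes> g = inv x \<otimes> g \<otimes> (x \<otimes> inv x)" using g x by (simp add: m_assoc)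
  also have "\<dots> = inv x \<otimes> (g \<otimes> x) \<otimes> inv x" using g x by (simp add: m_assoc)
  also have "\<dots> = inv x \<otimes> (x \<otimes> g) \<otimes> inv x" using c by simp
  also have "\<dots> = g \<otimes> inv x" using g x by (simp add: m_assoc[symmetric])
  finally show ?thesis by simp
qed

lemma comm_move:
  assumes "g \<in> carrier G" "x \<in> carrier G" "g \<otimes> x = x \<otimes> g"
  shows "dist (\<phi> g (\<phi> (x [^] (K::nat)) p)) (\<phi> (x [^] K) p) = dist (\<phi> g p) p"
proof -
  have "\<phi> g (\<phi> (x [^] K) p) = \<phi> (x [^] K) (\<phi> g p)"
    using comm_pow[OF assms, of K] assms by (metis nat_pow_closed phi_mult)
  then show ?thesis using assms by (simp add: phi_isom)
qed

subsection \<open>Power words\<close>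

lemma pw_pts:
  assumes a: "alph \<Sigma> A B" and r: "red \<Sigma> (W @ W)" and k: "(k::nat) \<le> k'"
  shows "pts (concat (replicate k' W)) (k * length W) = \<phi> (wprod W [^] k) p"
proof -
  have sW: "set W \<subseteq> carrier G" using a r unfolding alph_def red_def by auto
  have e: "concat (replicate k' W) = concat (replicate k W) @ concat (replicate (k' - k) W)"
    using k concat_rep_add[of k "k' - k" W] by simp
  show ?thesis unfolding e using pts_len_app[of "concat (replicate k W)"] wprod_concat_rep[OF sW]
    by (simp add: length_concat_rep)
qed

lemma pw_gamma: "alph \<Sigma> A B \<Longrightarrow> A - 2 * B - 2 * \<delta> > 0"
  using alph_AB delta_nonneg by force

lemma pw_P1:
  assumes a: "alph \<Sigma> A B" and r: "red \<Sigma> (W @ W)" and ne: "W \<noteq> []" and k: "(k::nat) \<le> k'"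
  shows "gp (\<phi> (wprod W [^] k) p) (\<phi> (wprod W [^] k') p) p \<ge> dist p (\<phi> (wprod W [^] k) p) - (B + 2 * \<delta>)"
proof -
  have rr: "red \<Sigma> (concat (replicate k' W))" by (rule red_concat_rep[OF r ne])
  have "gp (pts (concat (replicate k' W)) (k * length W)) (pts (concat (replicate k' W)) (k' * length W)) p
      \<ge> dist p (pts (concat (replicate k' W)) (k * length W)) - (B + 2 * \<delta>)"
    using word_pref[OF a rr, of "k * length W" "k' * length W"] k by (simp add: length_concat_rep)
  then show ?thesis using pw_pts[OF a r k] pw_pts[OF a r, of k' k'] by simp
qed

lemma pw_dist:
  assumes a: "alph \<Sigma> A B" and r: "red \<Sigma> (W @ W)" and ne: "W \<noteq> []"
  shows "dist p (\<phi> (wprod W [^] (k::nat)) p) \<ge> real k * (A - 2 * B - 2 * \<delta>)"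
proof -
  have rr: "red \<Sigma> (concat (replicate k W))" by (rule red_concat_rep[OF r ne])
  have "dist p (pts (concat (replicate k W)) (k * length W)) \<ge> real (k * length W) * (A - 2 * B - 2 * \<delta>)"
    using word_dist[OF a rr, of "k * length W"] by (simp add: length_concat_rep)
  moreover have "real (k * length W) * (A - 2 * B - 2 * \<delta>) \<ge> real k * (A - 2 * B - 2 * \<delta>)"
  proof (rule mult_right_mono)
    show "real k \<le> real (k * length W)" using ne by (cases W) auto
  qed (use pw_gamma[OF a] in auto)
  ultimately show ?thesis using pw_pts[OF a r, of k k] by simp
qed

lemma pw_super:
  assumes a: "alph \<Sigma> A B" and r: "red \<Sigma> (W @ W)" and ne: "W \<noteq> []"
  shows "dist p (\<phi> (wprod W [^] ((k::nat) + m)) p) \<ge> dist p (\<phi> (wprod W [^] k) p) + dist p (\<phi> (wprod W [^] m) p) - 2 * (B + 2 * \<delta>)"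
proof (cases "k = 0 \<or> m = 0")
  case True
  have "wprod W [^] (0::nat) = \<one>" by simp
  then show ?thesis using True alph_AB[OF a] delta_nonneg by (auto simp: phi_one)
next
  case False
  have sW: "set W \<subseteq> carrier G" using a r unfolding alph_def red_def by auto
  define z where "z = wprod W"
  have zc: "z \<in> carrier G" unfolding z_def using sW by simp
  have rr: "red \<Sigma> (concat (replicate (k + m) W))" by (rule red_concat_rep[OF r ne])
  have "gp p (pts (concat (replicate (k + m) W)) ((k + m) * length W)) (pts (concat (replicate (k + m) W)) (k * length W)) \<le> B + 2 * \<delta>"
    using word_mid[OF a rr, of "k * length W" "(k + m) * length W"] False ne by (simp add: length_concat_rep)
  then have g1: "gp p (\<phi> (z [^] (k + m)) p) (\<phi> (z [^] k) p) \<le> B + 2 * \<delta>"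
    using pw_pts[OF a r, of k "k + m"] pw_pts[OF a r, of "k + m" "k + m"] unfolding z_def by simp
  have e: "dist p (\<phi> (z [^] (k + m)) p) = dist p (\<phi> (z [^] k) p) + dist (\<phi> (z [^] k) p) (\<phi> (z [^] (k + m)) p)
      - 2 * gp p (\<phi> (z [^] (k + m)) p) (\<phi> (z [^] k) p)"
    unfolding gromov_prod_def by (simp add: dist_commute field_simps)
  have "z [^] (k + m) = z [^] k \<otimes> z [^] m" using zc by (simp add: nat_pow_mult)
  then have "\<phi> (z [^] (k + m)) p = \<phi> (z [^] k) (\<phi> (z [^] m) p)" using zc by (simp add: phi_mult)
  then have "dist (\<phi> (z [^] k) p) (\<phi> (z [^] (k + m)) p) = dist p (\<phi> (z [^] m) p)" using zc by (simp add: phi_isom)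
  then show ?thesis using e g1 unfolding z_def by simp
qed

lemma pw_lox:
  assumes a: "alph \<Sigma> A B" and r: "red \<Sigma> (W @ W)" and ne: "W \<noteq> []" and n: "(n::nat) \<ge> 1"
  shows "loxodromic G \<phi> p (wprod W [^] n)"
proof -
  have sW: "set W \<subseteq> carrier G" using a r unfolding alph_def red_def by auto
  define z where "z = wprod W"
  have zc: "z \<in> carrier G" unfolding z_def using sW by simp
  define f where "f k = dist p (\<phi> ((z [^] n) [^] (k::nat)) p)" for k
  have fe: "f k = dist p (\<phi> (z [^] (n * k)) p)" for k unfolding f_def using zc by (simp add: nat_pow_pow)
  have "\<exists>L>0. (\<lambda>k. f k / real k) \<longlonglongrightarrow> L"
  proof (rule lin_limit)
    show "f (k + m) \<le> f k + f m" for k m unfolding fe using pow_sub[OF zc, of "n * k" "n * m"]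
      by (simp add: algebra_simps)
    show "f (k + m) \<ge> f k + f m - 2 * (B + 2 * \<delta>)" for k m unfolding fe
      using pw_super[OF a r ne, of "n * k" "n * m"] unfolding z_def by (simp add: algebra_simps)
    show "f k \<ge> real k * (A - 2 * B - 2 * \<delta>)" for k
    proof -
      have "f k \<ge> real (n * k) * (A - 2 * B - 2 * \<delta>)" unfolding fe z_def using pw_dist[OF a r ne, of "n * k"] by simp
      moreover have "real (n * k) * (A - 2 * B - 2 * \<delta>) \<ge> real k * (A - 2 * B - 2 * \<delta>)"
      proof (rule mult_right_mono)
        have "k \<le> n * k" using n by simp
        then show "real k \<le> real (n * k)" by (simp only: of_nat_le_iff)
      qed (use pw_gamma[OF a] in auto)
      ultimately show ?thesis by simp
    qed
    show "A - 2 * B - 2 * \<delta> > 0" by (rule pw_gamma[OF a])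
  qed
  then show ?thesis unfolding loxodromic_def f_def z_def using zc sW by (simp add: dist_commute)
qed

subsection \<open>Boundary\<close>

lemma gseq_lemma:
  assumes P1: "\<And>k k'. k \<le> k' \<Longrightarrow> gp (u k) (u k') p \<ge> dist p (u k) - c"
    and lo: "\<And>k. dist p (u k) \<ge> real k * \<gamma>" and g: "\<gamma> > 0"
  shows "gromov_seq p u"
  unfolding gromov_seq_def
proof
  fix M
  obtain N :: nat where N: "real N > (M + c) / \<gamma>" using reals_Archimedean2 by blast
  have NM: "real N * \<gamma> - c \<ge> M" using N g by (simp add: field_simps)
  show "\<exists>N. \<forall>m\<ge>N. \<forall>n\<ge>N. M \<le> gp (u m) (u n) p"
  proof (intro exI allI impI)
    fix m n assume mn: "N \<le> m" "N \<le> n"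
    have b: "real N * \<gamma> \<le> real k * \<gamma>" if "N \<le> k" for k using that g by (intro mult_right_mono) auto
    show "M \<le> gp (u m) (u n) p"
    proof (cases "m \<le> n")
      case True
      then show ?thesis using P1[OF True] lo[of m] b[OF mn(1)] NM by linarith
    next
      case False
      then show ?thesis using P1[of n m] lo[of n] b[OF mn(2)] NM gp_sym[of "u m" "u n" p] by linarith
    qed
  qed
qed

lemma equiv_sym:
  assumes e: "seq_equiv p u v" shows "seq_equiv p v u"
  unfolding seq_equiv_def
proof
  fix M
  obtain N where N: "\<forall>m\<ge>N. \<forall>n\<ge>N. M \<le> gp (u m) (v n) p" using e unfolding seq_equiv_def by blast
  show "\<exists>N. \<forall>m\<ge>N. \<forall>n\<ge>N. M \<le> gp (v m) (u n) p"
  proof (intro exI allI impI)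
    fix m n assume mn: "N \<le> m" "N \<le> n"
    have "M \<le> gp (u n) (v m) p" using N mn by blast
    then show "M \<le> gp (v m) (u n) p" by (simp add: gp_sym)
  qed
qed

lemma class_sub:
  assumes e: "seq_equiv p u v"
  shows "bd_class p u \<subseteq> bd_class p v"
proof
  fix w assume "w \<in> bd_class p u"
  then have w: "gromov_seq p w" "seq_equiv p u w" unfolding bd_class_def by auto
  have "seq_equiv p v w" unfolding seq_equiv_def
  proof
    fix M
    obtain N1 where N1: "\<forall>m\<ge>N1. \<forall>n\<ge>N1. M + \<delta> \<le> gp (u m) (v n) p" using e unfolding seq_equiv_def by blast
    obtain N2 where N2: "\<forall>m\<ge>N2. \<forall>n\<ge>N2. M + \<delta> \<le> gp (u m) (w n) p" using w(2) unfolding seq_equiv_def by blast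
    show "\<exists>N. \<forall>m\<ge>N. \<forall>n\<ge>N. M \<le> gp (v m) (w n) p"
    proof (intro exI allI impI)
      fix m n assume mn: "max N1 N2 \<le> m" "max N1 N2 \<le> n"
      have "gp (v m) (w n) p \<ge> min (gp (v m) (u (max N1 N2)) p) (gp (u (max N1 N2)) (w n) p) - \<delta>" by (rule hyp4)
      moreover have "gp (v m) (u (max N1 N2)) p \<ge> M + \<delta>"
      proof -
        have "M + \<delta> \<le> gp (u (max N1 N2)) (v m) p" using N1 mn by simp
        then show ?thesis by (simp add: gp_sym)
      qed
      moreover have "gp (u (max N1 N2)) (w n) p \<ge> M + \<delta>" using N2 mn by auto
      ultimately show "M \<le> gp (v m) (w n) p" by linarith
    qed
  qed
  then show "w \<in> bd_class p v" using w unfolding bd_class_def by auto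
qed

lemma class_eq: "seq_equiv p u v \<Longrightarrow> bd_class p u = bd_class p v"
  using class_sub equiv_sym by blast

lemma gp_act_base:
  assumes g: "g \<in> carrier G"
  shows "gp (\<phi> g x) (\<phi> g y) p \<ge> gp x y p - dist p (\<phi> (inv g) p)"
proof -
  have "gp (\<phi> g x) (\<phi> g y) p = gp (\<phi> g x) (\<phi> g y) (\<phi> g (\<phi> (inv g) p))" using g by (simp add: phi_inv_r)
  also have "\<dots> = gp x y (\<phi> (inv g) p)" using g by (simp add: gp_isom)
  finally show ?thesis using gp_base_change[of x y p "\<phi> (inv g) p"] by simp
qed

lemma inv_closure:
  assumes g: "g \<in> carrier G" and R: "\<And>n. dist (\<phi> g (u n)) (u n) \<le> R" and w: "w \<in> bd_class p u"
  shows "(\<lambda>n. \<phi> g (w n)) \<in> bd_class p u"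
proof -
  define R1 where "R1 = dist p (\<phi> (inv g) p)"
  have w': "gromov_seq p w" "seq_equiv p u w" using w unfolding bd_class_def by auto
  have "gromov_seq p (\<lambda>n. \<phi> g (w n))" unfolding gromov_seq_def
  proof
    fix M
    obtain N where N: "\<forall>m\<ge>N. \<forall>n\<ge>N. M + R1 \<le> gp (w m) (w n) p" using w'(1) unfolding gromov_seq_def by blast
    show "\<exists>N. \<forall>m\<ge>N. \<forall>n\<ge>N. M \<le> gp (\<phi> g (w m)) (\<phi> g (w n)) p"
    proof (intro exI allI impI)
      fix m n assume mn: "N \<le> m" "N \<le> n"
      have "M + R1 \<le> gp (w m) (w n) p" using N mn by blast
      moreover have "gp (\<phi> g (w m)) (\<phi> g (w n)) p \<ge> gp (w m) (w n) p - R1" unfolding R1_def by (rule gp_act_base[OF g])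
      ultimately show "M \<le> gp (\<phi> g (w m)) (\<phi> g (w n)) p" by linarith
    qed
  qed
  moreover have "seq_equiv p u (\<lambda>n. \<phi> g (w n))" unfolding seq_equiv_def
  proof
    fix M
    obtain N where N: "\<forall>m\<ge>N. \<forall>n\<ge>N. M + R1 + R \<le> gp (u m) (w n) p" using w'(2) unfolding seq_equiv_def by blast
    show "\<exists>N. \<forall>m\<ge>N. \<forall>n\<ge>N. M \<le> gp (u m) (\<phi> g (w n)) p"
    proof (intro exI allI impI)
      fix m n assume mn: "N \<le> m" "N \<le> n"
      have "gp (u m) (\<phi> g (w n)) p \<ge> gp (\<phi> g (u m)) (\<phi> g (w n)) p - dist (u m) (\<phi> g (u m))" by (rule gp_lip1)
      moreover have "gp (\<phi> g (u m)) (\<phi> g (w n)) p \<ge> gp (u m) (w n) p - R1" unfolding R1_def by (rule gp_act_base[OF g])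
      moreover have "dist (u m) (\<phi> g (u m)) \<le> R" using R by (simp add: dist_commute)
      ultimately show "M \<le> gp (u m) (\<phi> g (w n)) p" using N mn by fastforce
    qed
  qed
  ultimately show ?thesis unfolding bd_class_def by auto
qed

lemma fixed_class:
  assumes g: "g \<in> carrier G" and R: "\<And>n. dist (\<phi> g (u n)) (u n) \<le> R" and u: "gromov_seq p u"
  shows "bd_class p u \<in> bd_fixed_set \<phi> p g"
proof -
  have R': "dist (\<phi> (inv g) (u n)) (u n) \<le> R" for n
  proof -
    have "dist (\<phi> (inv g) (u n)) (u n) = dist (\<phi> g (\<phi> (inv g) (u n))) (\<phi> g (u n))" using g by (simp add: phi_isom)
    also have "\<dots> = dist (u n) (\<phi> g (u n))" using g by (simp add: phi_inv_r)
    finally show ?thesis using R[of n] by (simp add: dist_commute)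
  qed
  have "bd_act \<phi> g (bd_class p u) = bd_class p u"
  proof
    show "bd_act \<phi> g (bd_class p u) \<subseteq> bd_class p u"
      unfolding bd_act_def using inv_closure[OF g R] by auto
    show "bd_class p u \<subseteq> bd_act \<phi> g (bd_class p u)"
    proof
      fix w assume w: "w \<in> bd_class p u"
      have "(\<lambda>n. \<phi> (inv g) (w n)) \<in> bd_class p u" using inv_closure[OF _ R' w] g by simp
      moreover have "w = (\<lambda>n. \<phi> g (\<phi> (inv g) (w n)))" using g by (simp add: phi_inv_r)
      ultimately show "w \<in> bd_act \<phi> g (bd_class p u)" unfolding bd_act_def by (auto intro!: exI[of _ "\<lambda>n. \<phi> (inv g) (w n)"])
    qed
  qed
  moreover have "bd_class p u \<in> gromov_boundary p" using u unfolding gromov_boundary_def by auto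
  ultimately show ?thesis unfolding bd_fixed_set_def by auto
qed

lemma cross_bound:
  assumes g: "g \<in> carrier G" and h: "h \<in> carrier G"
    and P1u: "\<And>k k'. k \<le> k' \<Longrightarrow> gp (u k) (u k') p \<ge> dist p (u k) - c"
    and P1v: "\<And>k k'. k \<le> k' \<Longrightarrow> gp (v k) (v k') p \<ge> dist p (v k) - c"
    and gu: "gromov_seq p u" and gv: "gromov_seq p v"
    and Ru: "\<And>n. dist (\<phi> g (u n)) (u n) \<le> R" and Rv: "\<And>n. dist (\<phi> h (v n)) (v n) \<le> R'"
    and disj: "bd_fixed_set \<phi> p g \<inter> bd_fixed_set \<phi> p h = {}"
  shows "\<exists>M. \<forall>K. gp (u K) (v K) p \<le> M"
proof (rule ccontr)
  assume "\<not> (\<exists>M. \<forall>K. gp (u K) (v K) p \<le> M)"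
  then have big: "\<forall>M. \<exists>K. gp (u K) (v K) p > M" by (meson not_le)
  have "seq_equiv p u v" unfolding seq_equiv_def
  proof
    fix M
    obtain K where K: "gp (u K) (v K) p > M + \<bar>c\<bar> + 2 * \<delta>" using big by blast
    show "\<exists>N. \<forall>m\<ge>N. \<forall>n\<ge>N. M \<le> gp (u m) (v n) p"
    proof (intro exI allI impI)
      fix m n assume mn: "K \<le> m" "K \<le> n"
      have h3: "gp (u m) (v n) p \<ge> min (gp (u m) (u K) p) (min (gp (u K) (v K) p) (gp (v K) (v n) p)) - 2 * \<delta>"
        by (rule hyp4_3)
      have a1: "gp (u m) (u K) p \<ge> gp (u K) (v K) p - c"
        using P1u[OF mn(1)] gp_le_dist[of "u K" "v K" p] gp_sym[of "u m" "u K" p] by (simp add: dist_commute)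
      have a2: "gp (v K) (v n) p \<ge> gp (u K) (v K) p - c"
        using P1v[OF mn(2)] gp_le_dist[of "v K" "u K" p] gp_sym[of "u K" "v K" p] by (simp add: dist_commute)
      have "min (gp (u m) (u K) p) (min (gp (u K) (v K) p) (gp (v K) (v n) p)) \<ge> gp (u K) (v K) p - \<bar>c\<bar>"
        using a1 a2 abs_ge_self[of c] by (auto simp: min_def)
      then show "M \<le> gp (u m) (v n) p" using h3 K by linarith
    qed
  qed
  then have eq: "bd_class p u = bd_class p v" by (rule class_eq)
  have "bd_class p u \<in> bd_fixed_set \<phi> p g" by (rule fixed_class[OF g Ru gu])
  moreover have "bd_class p u \<in> bd_fixed_set \<phi> p h" unfolding eq by (rule fixed_class[OF h Rv gv])
  ultimately show False using disj by blast
qed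

end

context hypact begin

lemma succ_rep: "P x x \<Longrightarrow> successively P (replicate n x)"
proof (induction n)
  case (Suc n) then show ?case by (cases n) auto
qed simp

lemma concat_rep_single: "concat (replicate K [x]) = replicate K x"
  by (induction K) auto

lemma good_power:
  assumes lox: "loxodromic G \<phi> p g"
  shows "\<exists>n::nat\<ge>1. g [^] n \<noteq> inv (g [^] n) \<and>
     alph {g [^] n, inv (g [^] n)} (dist p (\<phi> (g [^] n) p)) (gp (\<phi> (g [^] n) p) (\<phi> (inv (g [^] n)) p) p)"
proof -
  have gc: "g \<in> carrier G" using lox unfolding loxodromic_def by auto
  obtain L where L: "L > 0" and lim: "(\<lambda>n. dist (\<phi> (g [^] n) p) p / real n) \<longlonglongrightarrow> L"
    using lox unfolding loxodromic_def by auto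
  define f where "f n = dist p (\<phi> (g [^] (n::nat)) p)" for n
  have lim': "(\<lambda>n. f n / real n) \<longlonglongrightarrow> L" using lim unfolding f_def by (simp add: dist_commute)
  have sm: "strict_mono (\<lambda>n::nat. 2 * n)" by (simp add: strict_mono_def)
  have lim2: "(\<lambda>n. f (2 * n) / real (2 * n)) \<longlonglongrightarrow> L"
    using LIMSEQ_subseq_LIMSEQ[OF lim' sm] by (simp add: o_def)
  have lim3: "(\<lambda>n. 2 * (f (2 * n) / real (2 * n)) - f n / real n) \<longlonglongrightarrow> 2 * L - L"
    by (intro tendsto_intros lim2 lim')
  have "eventually (\<lambda>n. L / 2 < 2 * (f (2 * n) / real (2 * n)) - f n / real n) sequentially"
  proof -
    have "L / 2 < 2 * L - L" using L by simp
    from order_tendstoD(1)[OF lim3 this] show ?thesis .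
  qed
  then obtain N1 where N1: "\<And>n. n \<ge> N1 \<Longrightarrow> L / 2 < 2 * (f (2 * n) / real (2 * n)) - f n / real n"
    unfolding eventually_sequentially by blast
  obtain N2 :: nat where N2: "real N2 > 6 * \<delta> / L" using reals_Archimedean2 by blast
  define n where "n = max (max N1 N2) 1"
  have n1: "n \<ge> 1" "n \<ge> N1" "n \<ge> N2" unfolding n_def by auto
  have np: "real n > 0" using n1 by simp
  have "L / 2 < 2 * (f (2 * n) / real (2 * n)) - f n / real n" using N1 n1 by simp
  also have "\<dots> = (f (2 * n) - f n) / real n" using np by (simp add: field_simps)
  finally have "f (2 * n) - f n > real n * (L / 2)" using np by (simp add: field_simps)
  moreover have "real n * (L / 2) > 3 * \<delta>"
  proof -
    have "real n \<ge> real N2" using n1 by simp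
    then have "real n > 6 * \<delta> / L" using N2 by linarith
    then show ?thesis using L by (simp add: field_simps)
  qed
  ultimately have key: "f (2 * n) - f n > 3 * \<delta>" by linarith
  define x where "x = g [^] n"
  have xc: "x \<in> carrier G" "inv x \<in> carrier G" unfolding x_def using gc by auto
  have xx: "\<phi> x (\<phi> x p) = \<phi> (g [^] (2 * n)) p"
  proof -
    have "x \<otimes> x = g [^] (2 * n)" unfolding x_def using gc by (simp add: nat_pow_mult mult_2)
    then show ?thesis using xc by (metis phi_mult)
  qed
  define B where "B = gp (\<phi> x p) (\<phi> (inv x) p) p"
  have dinv: "dist p (\<phi> (inv x) p) = dist p (\<phi> x p)" using dist_inv xc by simp
  have dxx: "dist (\<phi> x p) (\<phi> (inv x) p) = f (2 * n)"
  proof -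
    have "dist (\<phi> x p) (\<phi> (inv x) p) = dist (\<phi> x (\<phi> x p)) (\<phi> x (\<phi> (inv x) p))" using xc by (simp add: phi_isom)
    also have "\<dots> = dist (\<phi> (g [^] (2 * n)) p) p" using xx xc by (simp add: phi_inv_r)
    finally show ?thesis unfolding f_def by (simp add: dist_commute)
  qed
  have Bv: "2 * B = 2 * f n - f (2 * n)" unfolding B_def gromov_prod_def using dxx dinv
    unfolding f_def x_def by (simp add: dist_commute)
  have AB: "2 * B + 3 * \<delta> < dist p (\<phi> x p)" using Bv key unfolding f_def x_def by simp
  have B0: "B \<ge> 0" unfolding B_def by (rule gp_nonneg)
  have neq: "x \<noteq> inv x"
  proof
    assume "x = inv x"
    then have "B = dist p (\<phi> x p)" unfolding B_def by (simp add: gp_same dist_commute)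
    then show False using AB B0 delta_nonneg by simp
  qed
  have "alph {x, inv x} (dist p (\<phi> x p)) B"
    unfolding alph_def using xc AB B0 dinv by (auto simp: B_def gp_sym)
  then show ?thesis using n1 neq unfolding x_def B_def by (intro exI[of _ n]) auto
qed

lemma letter_red:
  assumes "x \<in> \<Sigma>" "x \<noteq> inv x" shows "red \<Sigma> ([x] @ [x])"
  using assms unfolding red_def by simp

lemma bound_neq:
  assumes a: "alph \<Sigma> A B" and u: "u \<in> \<Sigma>" and b: "gp (\<phi> u p) (\<phi> v p) p \<le> B"
  shows "u \<noteq> v"
proof
  assume "u = v"
  then have "gp (\<phi> u p) (\<phi> v p) p = dist p (\<phi> u p)" by (simp add: gp_same dist_commute)
  moreover have "A \<le> dist p (\<phi> u p)" using a u unfolding alph_def by auto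
  ultimately show False using b alph_AB[OF a] delta_nonneg by linarith
qed

lemma letter_facts:
  assumes a: "alph \<Sigma> A B" and x: "x \<in> \<Sigma>" and xn: "x \<noteq> inv x"
  shows "\<And>k k'. k \<le> k' \<Longrightarrow> gp (\<phi> (x [^] (k::nat)) p) (\<phi> (x [^] k') p) p \<ge> dist p (\<phi> (x [^] k) p) - (B + 2 * \<delta>)"
    and "\<And>k. dist p (\<phi> (x [^] (k::nat)) p) \<ge> real k * (A - 2 * B - 2 * \<delta>)"
    and "gromov_seq p (\<lambda>k. \<phi> (x [^] k) p)"
proof -
  have xc: "x \<in> carrier G" using a x unfolding alph_def by auto
  have r: "red \<Sigma> ([x] @ [x])" by (rule letter_red[OF x xn])
  have w: "wprod [x] = x" using xc by simp
  show P1: "\<And>k k'. k \<le> k' \<Longrightarrow> gp (\<phi> (x [^] (k::nat)) p) (\<phi> (x [^] k') p) p \<ge> dist p (\<phi> (x [^] k) p) - (B + 2 * \<delta>)"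
    using pw_P1[OF a r] w by simp
  show lo: "\<And>k. dist p (\<phi> (x [^] (k::nat)) p) \<ge> real k * (A - 2 * B - 2 * \<delta>)"
    using pw_dist[OF a r] w by simp
  show "gromov_seq p (\<lambda>k. \<phi> (x [^] k) p)"
    by (rule gseq_lemma[OF P1 lo pw_gamma[OF a]])
qed

lemma inv_letter:
  assumes a: "alph \<Sigma> A B" and x: "x \<in> \<Sigma>" and xn: "x \<noteq> inv x"
  shows "inv x \<in> \<Sigma>" "inv x \<noteq> inv (inv x)"
proof -
  have xc: "x \<in> carrier G" using a x unfolding alph_def by auto
  show "inv x \<in> \<Sigma>" using a x unfolding alph_def by auto
  show "inv x \<noteq> inv (inv x)" using xn xc by auto
qed

lemma self_branch:
  assumes a: "alph \<Sigma> A B" and x: "x \<in> \<Sigma>" and xn: "x \<noteq> inv x" and K: "K \<ge> 1"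
    and lm: "\<forall>z\<in>\<Sigma>. dist p (\<phi> z p) \<le> Lm"
  shows "gp (\<phi> (x [^] (K::nat)) p) (\<phi> (inv x [^] K) p) p \<le> B + 2 * \<delta>"
proof -
  have xc: "x \<in> carrier G" "inv x \<in> carrier G" using a x unfolding alph_def by auto
  have ix: "inv x \<in> \<Sigma>" "inv x \<noteq> inv (inv x)" using inv_letter[OF a x xn] by auto
  have r1: "red \<Sigma> (replicate K x)" using red_concat_rep[OF letter_red[OF x xn], of K] by (simp add: concat_rep_single)
  have r2: "red \<Sigma> (replicate K (inv x))" using red_concat_rep[OF letter_red[OF ix(1) ix(2)], of K] by (simp add: concat_rep_single)
  obtain K' where K': "K = Suc K'" using K by (cases K) auto
  have "gp (\<phi> (wprod ([] @ x # replicate K' x)) p) (\<phi> (wprod ([] @ inv x # replicate K' (inv x))) p) p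
      \<le> real (length ([]::'g list)) * Lm + B + 2 * \<delta>"
    by (rule word_branch[OF a lm]) (use r1 r2 K' xn in auto)
  moreover have "wprod (x # replicate K' x) = x [^] K"
    using xc K' wprod_replicate[of x K'] nat_pow_Suc2[of x K'] by simp
  moreover have "wprod (inv x # replicate K' (inv x)) = inv x [^] K"
    using xc K' wprod_replicate[of "inv x" K'] nat_pow_Suc2[of "inv x" K'] by simp
  ultimately show ?thesis by simp
qed

lemma pair_cross:
  assumes ne: "bd_fixed_set \<phi> p g \<inter> bd_fixed_set \<phi> p h = {}" and gc: "g \<in> carrier G" and hc: "h \<in> carrier G"
    and ax: "alph \<Sigma>x Ax Bx" and xs: "xs \<in> \<Sigma>x" "xs \<noteq> inv xs" "g \<otimes> xs = xs \<otimes> g"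
    and ay: "alph \<Sigma>y Ay By" and ys: "ys \<in> \<Sigma>y" "ys \<noteq> inv ys" "h \<otimes> ys = ys \<otimes> h"
  shows "\<exists>M. \<forall>K::nat. gp (\<phi> (xs [^] K) p) (\<phi> (ys [^] K) p) p \<le> M"
proof -
  have xc: "xs \<in> carrier G" using ax xs unfolding alph_def by auto
  have yc: "ys \<in> carrier G" using ay ys unfolding alph_def by auto
  have B0: "Bx \<ge> 0" "By \<ge> 0" using alph_AB[OF ax] alph_AB[OF ay] by auto
  define c where "c = Bx + By + 2 * \<delta>"
  note fx = letter_facts[OF ax xs(1) xs(2)]
  note fy = letter_facts[OF ay ys(1) ys(2)]
  show ?thesis
  proof (rule cross_bound[OF gc hc, where c = c])
    show "gp (\<phi> (xs [^] k) p) (\<phi> (xs [^] k') p) p \<ge> dist p (\<phi> (xs [^] k) p) - c" if "k \<le> k'" for k k' :: nat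
      using fx(1)[OF that] B0 unfolding c_def by linarith
    show "gp (\<phi> (ys [^] k) p) (\<phi> (ys [^] k') p) p \<ge> dist p (\<phi> (ys [^] k) p) - c" if "k \<le> k'" for k k' :: nat
      using fy(1)[OF that] B0 unfolding c_def by linarith
    show "gromov_seq p (\<lambda>k. \<phi> (xs [^] k) p)" by (rule fx(3))
    show "gromov_seq p (\<lambda>k. \<phi> (ys [^] k) p)" by (rule fy(3))
    show "dist (\<phi> g (\<phi> (xs [^] n) p)) (\<phi> (xs [^] n) p) \<le> dist (\<phi> g p) p" for n :: nat
      using comm_move[OF gc xc xs(3)] by simp
    show "dist (\<phi> h (\<phi> (ys [^] n) p)) (\<phi> (ys [^] n) p) \<le> dist (\<phi> h p) p" for n :: nat
      using comm_move[OF hc yc ys(3)] by simp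
    show "bd_fixed_set \<phi> p g \<inter> bd_fixed_set \<phi> p h = {}" by (rule ne)
  qed
qed

lemma pow_comm_base: "g \<in> carrier G \<Longrightarrow> g \<otimes> g [^] (n::nat) = g [^] n \<otimes> g"
  using nat_pow_Suc2[of g n] by simp

lemma ab_exists:
  assumes ne: "non_elementary G \<phi> p"
  shows "\<exists>a b A B. a \<in> carrier G \<and> b \<in> carrier G \<and> alph {a, inv a, b, inv b} A B \<and>
     a \<noteq> inv a \<and> b \<noteq> inv a \<and> a \<noteq> inv b \<and> b \<noteq> a \<and> inv b \<noteq> inv a"
proof -
  obtain g h where gc: "g \<in> carrier G" and hc: "h \<in> carrier G" and lg: "loxodromic G \<phi> p g"
    and lh: "loxodromic G \<phi> p h" and disj: "bd_fixed_set \<phi> p g \<inter> bd_fixed_set \<phi> p h = {}"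
    using ne unfolding non_elementary_def by blast
  obtain n1 :: nat where n1: "g [^] n1 \<noteq> inv (g [^] n1)"
    "alph {g [^] n1, inv (g [^] n1)} (dist p (\<phi> (g [^] n1) p)) (gp (\<phi> (g [^] n1) p) (\<phi> (inv (g [^] n1)) p) p)"
    using good_power[OF lg] by blast
  obtain n2 :: nat where n2: "h [^] n2 \<noteq> inv (h [^] n2)"
    "alph {h [^] n2, inv (h [^] n2)} (dist p (\<phi> (h [^] n2) p)) (gp (\<phi> (h [^] n2) p) (\<phi> (inv (h [^] n2)) p) p)"
    using good_power[OF lh] by blast
  define x where "x = g [^] n1"
  define y where "y = h [^] n2"
  define Ax where "Ax = dist p (\<phi> x p)"
  define Ay where "Ay = dist p (\<phi> y p)"
  define Bx where "Bx = gp (\<phi> x p) (\<phi> (inv x) p) p"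
  define By where "By = gp (\<phi> y p) (\<phi> (inv y) p) p"
  have ax: "alph {x, inv x} Ax Bx" using n1 unfolding x_def Ax_def Bx_def by simp
  have ay: "alph {y, inv y} Ay By" using n2 unfolding y_def Ay_def By_def by simp
  have xn: "x \<noteq> inv x" using n1 unfolding x_def by simp
  have yn: "y \<noteq> inv y" using n2 unfolding y_def by simp
  have xc: "x \<in> carrier G" "inv x \<in> carrier G" unfolding x_def using gc by auto
  have yc: "y \<in> carrier G" "inv y \<in> carrier G" unfolding y_def using hc by auto
  have cx: "g \<otimes> x = x \<otimes> g" unfolding x_def using pow_comm_base[OF gc] .
  have cy: "h \<otimes> y = y \<otimes> h" unfolding y_def using pow_comm_base[OF hc] .
  have cx': "g \<otimes> inv x = inv x \<otimes> g" using comm_inv[OF gc xc(1) cx] .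
  have cy': "h \<otimes> inv y = inv y \<otimes> h" using comm_inv[OF hc yc(1) cy] .
  have ix: "inv x \<in> {x, inv x}" "inv x \<noteq> inv (inv x)" using xn xc by auto
  have iy: "inv y \<in> {y, inv y}" "inv y \<noteq> inv (inv y)" using yn yc by auto
  obtain M1 where M1: "\<forall>K::nat. gp (\<phi> (x [^] K) p) (\<phi> (y [^] K) p) p \<le> M1"
    using pair_cross[OF disj gc hc ax _ xn cx ay _ yn cy] by auto
  obtain M2 where M2: "\<forall>K::nat. gp (\<phi> (x [^] K) p) (\<phi> (inv y [^] K) p) p \<le> M2"
    using pair_cross[OF disj gc hc ax _ xn cx ay iy(1) iy(2) cy'] by auto
  obtain M3 where M3: "\<forall>K::nat. gp (\<phi> (inv x [^] K) p) (\<phi> (y [^] K) p) p \<le> M3"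
    using pair_cross[OF disj gc hc ax ix(1) ix(2) cx' ay _ yn cy] by auto
  obtain M4 where M4: "\<forall>K::nat. gp (\<phi> (inv x [^] K) p) (\<phi> (inv y [^] K) p) p \<le> M4"
    using pair_cross[OF disj gc hc ax ix(1) ix(2) cx' ay iy(1) iy(2) cy'] by auto
  define Bm where "Bm = max (max (Bx + 2 * \<delta>) (By + 2 * \<delta>)) (max (max M1 M2) (max M3 M4))"
  have Bx0: "Bx \<ge> 0" "By \<ge> 0" using alph_AB[OF ax] alph_AB[OF ay] by auto
  have Bm0: "Bm \<ge> 0" unfolding Bm_def using Bx0 delta_nonneg by auto
  define gx where "gx = Ax - 2 * Bx - 2 * \<delta>"
  define gy where "gy = Ay - 2 * By - 2 * \<delta>"
  have gxp: "gx > 0" unfolding gx_def by (rule pw_gamma[OF ax])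
  have gyp: "gy > 0" unfolding gy_def by (rule pw_gamma[OF ay])
  obtain K0 :: nat where K0: "real K0 > (2 * Bm + 3 * \<delta>) / min gx gy" using reals_Archimedean2 by blast
  define K where "K = max K0 1"
  have K1: "K \<ge> 1" unfolding K_def by simp
  have Kb: "real K * min gx gy > 2 * Bm + 3 * \<delta>"
  proof -
    have "real K \<ge> real K0" unfolding K_def by simp
    then have "real K > (2 * Bm + 3 * \<delta>) / min gx gy" using K0 by linarith
    then show ?thesis using gxp gyp by (simp add: field_simps)
  qed
  have Kx: "real K * gx > 2 * Bm + 3 * \<delta>"
    using Kb gxp gyp K1 by (smt (verit, best) mult_left_mono of_nat_0_le_iff min.cobounded1)
  have Ky: "real K * gy > 2 * Bm + 3 * \<delta>"
    using Kb gxp gyp K1 by (smt (verit, best) mult_left_mono of_nat_0_le_iff min.cobounded2)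
  define a where "a = x [^] K"
  define b where "b = y [^] K"
  have ac: "a \<in> carrier G" "inv a \<in> carrier G" unfolding a_def using xc by auto
  have bc: "b \<in> carrier G" "inv b \<in> carrier G" unfolding b_def using yc by auto
  have ia: "inv a = inv x [^] K" unfolding a_def using xc by (simp add: nat_pow_inv)
  have ib: "inv b = inv y [^] K" unfolding b_def using yc by (simp add: nat_pow_inv)
  have la: "dist p (\<phi> a p) \<ge> real K * gx" unfolding a_def gx_def
    using letter_facts(2)[OF ax _ xn, of K] by simp
  have lb: "dist p (\<phi> b p) \<ge> real K * gy" unfolding b_def gy_def
    using letter_facts(2)[OF ay _ yn, of K] by simp
  have lia: "dist p (\<phi> (inv a) p) = dist p (\<phi> a p)" using dist_inv ac by simp
  have lib: "dist p (\<phi> (inv b) p) = dist p (\<phi> b p)" using dist_inv bc by simp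
  define A where "A = min (dist p (\<phi> a p)) (dist p (\<phi> b p))"
  have AB: "2 * Bm + 3 * \<delta> < A" unfolding A_def using la lb Kx Ky by simp
  have lmx: "\<forall>z\<in>{x, inv x}. dist p (\<phi> z p) \<le> Ax" unfolding Ax_def using dist_inv xc by auto
  have lmy: "\<forall>z\<in>{y, inv y}. dist p (\<phi> z p) \<le> Ay" unfolding Ay_def using dist_inv yc by auto
  have s1: "gp (\<phi> (x [^] K) p) (\<phi> (inv x [^] K) p) p \<le> Bx + 2 * \<delta>" by (rule self_branch[OF ax _ xn K1 lmx]) simp
  then have "gp (\<phi> a p) (\<phi> (inv a) p) p \<le> Bx + 2 * \<delta>" by (simp only: a_def[symmetric] ia[symmetric])
  moreover have "Bx + 2 * \<delta> \<le> Bm" unfolding Bm_def by simp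
  ultimately have f1: "gp (\<phi> a p) (\<phi> (inv a) p) p \<le> Bm" by linarith
  have s2: "gp (\<phi> (y [^] K) p) (\<phi> (inv y [^] K) p) p \<le> By + 2 * \<delta>" by (rule self_branch[OF ay _ yn K1 lmy]) simp
  then have "gp (\<phi> b p) (\<phi> (inv b) p) p \<le> By + 2 * \<delta>" by (simp only: b_def[symmetric] ib[symmetric])
  moreover have "By + 2 * \<delta> \<le> Bm" unfolding Bm_def by simp
  ultimately have f2: "gp (\<phi> b p) (\<phi> (inv b) p) p \<le> Bm" by linarith
  have f3: "gp (\<phi> a p) (\<phi> b p) p \<le> Bm" using M1 unfolding a_def b_def Bm_def by (meson max.coboundedI2 max.coboundedI1 order_trans)
  have f4: "gp (\<phi> a p) (\<phi> (inv b) p) p \<le> Bm" using M2 unfolding a_def ib Bm_def by (meson max.coboundedI2 max.coboundedI1 order_trans)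
  have f5: "gp (\<phi> (inv a) p) (\<phi> b p) p \<le> Bm" using M3 unfolding ia b_def Bm_def by (meson max.coboundedI2 max.coboundedI1 order_trans)
  have f6: "gp (\<phi> (inv a) p) (\<phi> (inv b) p) p \<le> Bm" using M4 unfolding ia ib Bm_def by (meson max.coboundedI2 max.coboundedI1 order_trans)
  have f1': "gp (\<phi> (inv a) p) (\<phi> a p) p \<le> Bm" using f1 by (simp add: gp_sym)
  have f2': "gp (\<phi> (inv b) p) (\<phi> b p) p \<le> Bm" using f2 by (simp add: gp_sym)
  have f3': "gp (\<phi> b p) (\<phi> a p) p \<le> Bm" using f3 by (simp add: gp_sym)
  have f4': "gp (\<phi> (inv b) p) (\<phi> a p) p \<le> Bm" using f4 by (simp add: gp_sym)
  have f5': "gp (\<phi> b p) (\<phi> (inv a) p) p \<le> Bm" using f5 by (simp add: gp_sym)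
  have f6': "gp (\<phi> (inv b) p) (\<phi> (inv a) p) p \<le> Bm" using f6 by (simp add: gp_sym)
  have alA: "alph {a, inv a, b, inv b} A Bm"
    unfolding alph_def
  proof (intro conjI)
    show "{a, inv a, b, inv b} \<subseteq> carrier G" using ac bc by auto
    show "\<forall>z\<in>{a, inv a, b, inv b}. inv z \<in> {a, inv a, b, inv b}" using ac bc by auto
    show "\<forall>z\<in>{a, inv a, b, inv b}. A \<le> dist p (\<phi> z p)" unfolding A_def using lia lib by auto
    show "\<forall>u\<in>{a, inv a, b, inv b}. \<forall>v\<in>{a, inv a, b, inv b}. u \<noteq> v \<longrightarrow> gp (\<phi> u p) (\<phi> v p) p \<le> Bm"
      using f1 f2 f3 f4 f5 f6 f1' f2' f3' f4' f5' f6' by auto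
    show "2 * Bm + 3 * \<delta> < A" by (rule AB)
    show "0 \<le> Bm" by (rule Bm0)
  qed
  have d1: "a \<noteq> inv a" using bound_neq[OF alA _ f1] by simp
  have d2: "b \<noteq> inv a" using bound_neq[OF alA _ f5'] by simp
  have d3: "a \<noteq> inv b" using bound_neq[OF alA _ f4] by simp
  have d4: "b \<noteq> a" using bound_neq[OF alA _ f3'] by simp
  have d5: "inv b \<noteq> inv a" using bound_neq[OF alA _ f6'] by simp
  show ?thesis using ac bc alA d1 d2 d3 d4 d5 by blast
qed

end

context hypact begin

lemma gp_shift:
  assumes u: "u \<in> carrier G"
  shows "gp (\<phi> u p) (\<phi> u y) p = dist p (\<phi> u p) - gp (\<phi> (inv u) p) y p"
proof -
  have s: "gp (\<phi> u y) (\<phi> u p) p + gp (\<phi> u y) p (\<phi> u p) = dist p (\<phi> u p)" by (rule gp_split)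
  have "gp (\<phi> u y) p (\<phi> u p) = gp (\<phi> (inv u) (\<phi> u y)) (\<phi> (inv u) p) (\<phi> (inv u) (\<phi> u p))"
    using u by (simp add: gp_isom)
  also have "\<dots> = gp y (\<phi> (inv u) p) p" using u by (simp add: phi_inv_l)
  finally show ?thesis using s by (simp add: gp_sym)
qed

lemma count_bad:
  fixes S :: "'g set" and \<sigma> :: "'g \<Rightarrow> 'g"
  assumes fin: "finite S" and sc: "\<forall>s\<in>S. \<sigma> s \<in> carrier G"
    and T1: "\<forall>s\<in>S. \<forall>t\<in>S. s \<noteq> t \<longrightarrow> gp (\<phi> (\<sigma> s) p) (\<phi> (\<sigma> t) p) p \<le> B'"
    and T2: "\<forall>s\<in>S. \<forall>t\<in>S. s \<noteq> t \<longrightarrow> gp (\<phi> (inv (\<sigma> s)) p) (\<phi> (inv (\<sigma> t)) p) p \<le> B'"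
    and Dl: "\<forall>s\<in>S. dist p (\<phi> (\<sigma> s) p) \<ge> C + B' + \<delta> + 1"
    and C: "C \<ge> B' + 2 * \<delta> + 1"
  shows "card {s\<in>S. C < gp x (\<phi> (\<sigma> s) y) p} \<le> 2"
proof -
  define K where "K = B' + \<delta> + 1"
  define P1 where "P1 = {s\<in>S. K < gp (\<phi> (inv (\<sigma> s)) p) y p}"
  define P2 where "P2 = {s\<in>S. C < gp x (\<phi> (\<sigma> s) y) p} - P1"
  have f1: "finite P1" "finite P2" using fin unfolding P1_def P2_def by auto
  have c1: "card P1 \<le> 1"
  proof -
    have "\<forall>s\<in>P1. \<forall>t\<in>P1. s = t"
    proof (intro ballI, rule ccontr)
      fix s t assume st: "s \<in> P1" "t \<in> P1" "s \<noteq> t"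
      have h: "gp (\<phi> (inv (\<sigma> s)) p) (\<phi> (inv (\<sigma> t)) p) p \<ge> min (gp (\<phi> (inv (\<sigma> s)) p) y p) (gp y (\<phi> (inv (\<sigma> t)) p) p) - \<delta>"
        by (rule hyp4)
      have "gp y (\<phi> (inv (\<sigma> t)) p) p > K" using st unfolding P1_def by (simp add: gp_sym)
      moreover have "gp (\<phi> (inv (\<sigma> s)) p) y p > K" using st unfolding P1_def by simp
      moreover have "gp (\<phi> (inv (\<sigma> s)) p) (\<phi> (inv (\<sigma> t)) p) p \<le> B'" using T2 st unfolding P1_def by auto
      ultimately show False using h unfolding K_def by (simp add: min_def split: if_splits)
    qed
    then show ?thesis using card_le_Suc0_iff_eq[OF f1(1)] by simp
  qed
  have near: "gp x (\<phi> (\<sigma> s) p) p \<ge> C - \<delta>" if s: "s \<in> P2" for s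
  proof -
    have sS: "s \<in> S" "\<sigma> s \<in> carrier G" using s sc unfolding P2_def by auto
    have "gp (\<phi> (\<sigma> s) p) (\<phi> (\<sigma> s) y) p = dist p (\<phi> (\<sigma> s) p) - gp (\<phi> (inv (\<sigma> s)) p) y p"
      by (rule gp_shift[OF sS(2)])
    moreover have "gp (\<phi> (inv (\<sigma> s)) p) y p \<le> K" using s unfolding P2_def P1_def by auto
    moreover have "dist p (\<phi> (\<sigma> s) p) \<ge> C + B' + \<delta> + 1" using Dl sS by auto
    ultimately have a: "gp (\<phi> (\<sigma> s) y) (\<phi> (\<sigma> s) p) p \<ge> C" unfolding K_def by (simp add: gp_sym)
    have b: "gp x (\<phi> (\<sigma> s) y) p > C" using s unfolding P2_def by auto
    have "gp x (\<phi> (\<sigma> s) p) p \<ge> min (gp x (\<phi> (\<sigma> s) y) p) (gp (\<phi> (\<sigma> s) y) (\<phi> (\<sigma> s) p) p) - \<delta>"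
      by (rule hyp4)
    then show ?thesis using a b by (simp add: min_def split: if_splits)
  qed
  have c2: "card P2 \<le> 1"
  proof -
    have "\<forall>s\<in>P2. \<forall>t\<in>P2. s = t"
    proof (intro ballI, rule ccontr)
      fix s t assume st: "s \<in> P2" "t \<in> P2" "s \<noteq> t"
      have h: "gp (\<phi> (\<sigma> s) p) (\<phi> (\<sigma> t) p) p \<ge> min (gp (\<phi> (\<sigma> s) p) x p) (gp x (\<phi> (\<sigma> t) p) p) - \<delta>"
        by (rule hyp4)
      have "gp (\<phi> (\<sigma> s) p) x p \<ge> C - \<delta>" using near[OF st(1)] by (simp add: gp_sym)
      moreover have "gp x (\<phi> (\<sigma> t) p) p \<ge> C - \<delta>" using near[OF st(2)] .
      moreover have "gp (\<phi> (\<sigma> s) p) (\<phi> (\<sigma> t) p) p \<le> B'" using T1 st unfolding P2_def by auto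
      ultimately show False using h C by (simp add: min_def split: if_splits)
    qed
    then show ?thesis using card_le_Suc0_iff_eq[OF f1(2)] by simp
  qed
  have "{s\<in>S. C < gp x (\<phi> (\<sigma> s) y) p} \<subseteq> P1 \<union> P2" unfolding P2_def by auto
  then have "card {s\<in>S. C < gp x (\<phi> (\<sigma> s) y) p} \<le> card (P1 \<union> P2)" using f1 by (intro card_mono) auto
  also have "\<dots> \<le> card P1 + card P2" by (rule card_Un_le)
  finally show ?thesis using c1 c2 by simp
qed

lemma card_split: "finite S \<Longrightarrow> card S = card {s\<in>S. P s} + card {s\<in>S. \<not> P s}"
proof -
  assume f: "finite S"
  have "S = {s\<in>S. P s} \<union> {s\<in>S. \<not> P s}" by auto
  moreover have "card ({s\<in>S. P s} \<union> {s\<in>S. \<not> P s}) = card {s\<in>S. P s} + card {s\<in>S. \<not> P s}"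
    using f by (intro card_Un_disjoint) auto
  ultimately show ?thesis by simp
qed

lemma schottky_from:
  assumes fin: "finite S" and sc: "S \<subseteq> carrier G"
    and T: "\<forall>s\<in>S. \<forall>t\<in>S. s \<noteq> t \<longrightarrow> gp (\<phi> s p) (\<phi> t p) p \<le> B' \<and> gp (\<phi> (inv s) p) (\<phi> (inv t) p) p \<le> B'"
    and Dl: "\<forall>s\<in>S. dist p (\<phi> s p) \<ge> C + B' + \<delta> + 1" and Dl2: "\<forall>s\<in>S. dist p (\<phi> s p) \<ge> D"
    and C: "C \<ge> B' + 2 * \<delta> + 1" and eps: "\<epsilon> * real (card S) \<ge> 2"
  shows "schottky G \<phi> p \<epsilon> C D S"
  unfolding schottky_def
proof (intro conjI allI)
  show "finite S" "S \<subseteq> carrier G" by fact+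
  show "\<forall>s\<in>S. D \<le> dist p (\<phi> s p)" using Dl2 by auto
  have gen: "real (card {s\<in>S. gp x (\<phi> (\<sigma> s) y) p \<le> C}) \<ge> (1 - \<epsilon>) * real (card S)"
    if c: "card {s\<in>S. C < gp x (\<phi> (\<sigma> s) y) p} \<le> 2" for x y and \<sigma> :: "'g \<Rightarrow> 'g"
  proof -
    have "card S = card {s\<in>S. gp x (\<phi> (\<sigma> s) y) p \<le> C} + card {s\<in>S. \<not> gp x (\<phi> (\<sigma> s) y) p \<le> C}"
      by (rule card_split[OF fin])
    moreover have "{s\<in>S. \<not> gp x (\<phi> (\<sigma> s) y) p \<le> C} = {s\<in>S. C < gp x (\<phi> (\<sigma> s) y) p}" by auto
    ultimately have "real (card S) \<le> real (card {s\<in>S. gp x (\<phi> (\<sigma> s) y) p \<le> C}) + 2" using c by simp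
    then show ?thesis using eps by (simp add: algebra_simps)
  qed
  fix x y
  have sc': "\<forall>s\<in>S. s \<in> carrier G" using sc by auto
  have "card {s\<in>S. C < gp x (\<phi> ((\<lambda>s. s) s) y) p} \<le> 2"
  proof (rule count_bad[OF fin])
    show "\<forall>s\<in>S. s \<in> carrier G" by fact
    show "\<forall>s\<in>S. \<forall>t\<in>S. s \<noteq> t \<longrightarrow> gp (\<phi> s p) (\<phi> t p) p \<le> B'" using T by auto
    show "\<forall>s\<in>S. \<forall>t\<in>S. s \<noteq> t \<longrightarrow> gp (\<phi> (inv s) p) (\<phi> (inv t) p) p \<le> B'" using T by auto
  qed (use Dl C in auto)
  from gen[OF this] show "(1 - \<epsilon>) * real (card S) \<le> real (card {s \<in> S. gp x (\<phi> s y) p \<le> C})" by simp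
  have "card {s\<in>S. C < gp x (\<phi> ((\<lambda>s. inv s) s) y) p} \<le> 2"
  proof (rule count_bad[OF fin])
    show "\<forall>s\<in>S. inv s \<in> carrier G" using sc' by auto
    show "\<forall>s\<in>S. \<forall>t\<in>S. s \<noteq> t \<longrightarrow> gp (\<phi> (inv s) p) (\<phi> (inv t) p) p \<le> B'" using T by auto
    show "\<forall>s\<in>S. \<forall>t\<in>S. s \<noteq> t \<longrightarrow> gp (\<phi> (inv (inv s)) p) (\<phi> (inv (inv t)) p) p \<le> B'" using T sc' by auto
    show "\<forall>s\<in>S. dist p (\<phi> (inv s) p) \<ge> C + B' + \<delta> + 1" using Dl sc' dist_inv by auto
  qed (use C in auto)
  from gen[OF this] show "(1 - \<epsilon>) * real (card S) \<le> real (card {s \<in> S. gp x (\<phi> (inv s) y) p \<le> C})" by simp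
qed

lemma V_near:
  assumes xV: "x \<in> V_set p C (bd_class p us)" and near: "\<forall>m\<ge>1. gp (us m) z p \<ge> C"
  shows "gp x z p \<ge> C - 1/4 - 2 * \<delta>"
proof -
  have "ereal C \<le> gromov_prod_bd x (bd_class p us) p" using xV unfolding V_set_def by simp
  then have "ereal (C - 1/4) < (SUP u\<in>bd_class p us. liminf (\<lambda>n. ereal (gp x (u n) p)))"
    unfolding gromov_prod_bd_def
  proof -
    assume h: "ereal C \<le> (SUP u\<in>bd_class p us. liminf (\<lambda>n. ereal (gp x (u n) p)))"
    have "ereal (C - 1/4) < ereal C" by simp
    from less_le_trans[OF this h] show ?thesis .
  qed
  then obtain u where u: "u \<in> bd_class p us" and lu: "ereal (C - 1/4) < liminf (\<lambda>n. ereal (gp x (u n) p))"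
    by (auto simp: less_SUP_iff)
  have "eventually (\<lambda>n. ereal (C - 1/4) < ereal (gp x (u n) p)) sequentially" by (rule less_LiminfD[OF lu])
  then obtain N1 where N1: "\<And>n. n \<ge> N1 \<Longrightarrow> C - 1/4 < gp x (u n) p"
    unfolding eventually_sequentially by auto
  have "seq_equiv p us u" using u unfolding bd_class_def by auto
  then obtain N2 where N2: "\<forall>m\<ge>N2. \<forall>n\<ge>N2. C \<le> gp (us m) (u n) p" unfolding seq_equiv_def by blast
  define n where "n = max N1 N2"
  define m where "m = max N2 1"
  have h: "gp x z p \<ge> min (gp x (u n) p) (min (gp (u n) (us m) p) (gp (us m) z p)) - 2 * \<delta>" by (rule hyp4_3)
  have a1: "C - 1/4 < gp x (u n) p" using N1 unfolding n_def by simp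
  have a2: "C \<le> gp (u n) (us m) p" using N2 unfolding n_def m_def by (simp add: gp_sym)
  have a3: "C \<le> gp (us m) z p" using near unfolding m_def by simp
  show ?thesis using h a1 a2 a3 by (simp add: min_def split: if_splits)
qed

lemma V_self:
  assumes gs: "gromov_seq p us" and near: "\<forall>m\<ge>1. gp z (us m) p \<ge> C'"
  shows "z \<in> V_set p C' (bd_class p us)"
proof -
  have us: "us \<in> bd_class p us" using gs unfolding bd_class_def gromov_seq_def seq_equiv_def by simp
  have "ereal C' \<le> liminf (\<lambda>n. ereal (gp z (us n) p))"
  proof (rule Liminf_bounded)
    show "eventually (\<lambda>n. ereal C' \<le> ereal (gp z (us n) p)) sequentially"
      unfolding eventually_sequentially using near by (intro exI[of _ 1]) auto
  qed
  also have "\<dots> \<le> gromov_prod_bd z (bd_class p us) p" unfolding gromov_prod_bd_def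
    by (rule SUP_upper[OF us])
  finally show ?thesis unfolding V_set_def by simp
qed

end

context hypact begin

definition abgood :: "'g \<Rightarrow> 'g \<Rightarrow> real \<Rightarrow> real \<Rightarrow> bool" where
  "abgood a b A B \<longleftrightarrow> a \<in> carrier G \<and> b \<in> carrier G \<and> alph {a, inv a, b, inv b} A B \<and>
     a \<noteq> inv a \<and> b \<noteq> inv a \<and> a \<noteq> inv b \<and> b \<noteq> a \<and> inv b \<noteq> inv a"

definition Wd :: "'g \<Rightarrow> 'g \<Rightarrow> nat \<Rightarrow> 'g list" where
  "Wd a b i = replicate i a @ [b]"

definition Vd :: "'g \<Rightarrow> 'g \<Rightarrow> nat \<Rightarrow> 'g list" where
  "Vd a b i = inv b # replicate i (inv a)"

definition sfun :: "'g \<Rightarrow> 'g \<Rightarrow> nat \<Rightarrow> nat \<Rightarrow> 'g" where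
  "sfun a b i n = wprod (Wd a b i) [^] n"

lemma succ_rep_cons: "P x x \<Longrightarrow> P x y \<Longrightarrow> successively P (y # ys) \<Longrightarrow> successively P (replicate (Suc n) x @ y # ys)"
proof (induction n)
  case 0 then show ?case by simp
next
  case (Suc n)
  have "replicate (Suc (Suc n)) x @ y # ys = x # (replicate (Suc n) x @ y # ys)" by simp
  then show ?case using Suc by (simp only: successively_Cons) simp
qed

lemma Wd_red:
  assumes g: "abgood a b A B" and i: "i \<ge> 1"
  shows "red {a, inv a, b, inv b} (Wd a b i @ Wd a b i)"
proof -
  obtain i' where i': "i = Suc i'" using i by (cases i) auto
  have d: "a \<noteq> inv a" "b \<noteq> inv a" "a \<noteq> inv b" using g unfolding abgood_def by auto
  have e: "Wd a b i @ Wd a b i = replicate (Suc i') a @ b # (replicate (Suc i') a @ b # [])"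
    unfolding Wd_def i' by simp
  have s1: "successively (\<lambda>x y. y \<noteq> inv x) (replicate (Suc i') a @ b # [])"
    by (rule succ_rep_cons) (use d in auto)
  have s2: "successively (\<lambda>x y. y \<noteq> inv x) (b # (replicate (Suc i') a @ b # []))"
    using s1 d by (simp only: successively_Cons) simp
  have "successively (\<lambda>x y. y \<noteq> inv x) (Wd a b i @ Wd a b i)"
    unfolding e by (rule succ_rep_cons) (use d s2 in auto)
  moreover have "set (Wd a b i @ Wd a b i) \<subseteq> {a, inv a, b, inv b}" unfolding Wd_def by auto
  ultimately show ?thesis unfolding red_def by simp
qed

lemma Vd_red:
  assumes g: "abgood a b A B" and i: "i \<ge> 1"
  shows "red {a, inv a, b, inv b} (Vd a b i @ Vd a b i)"
proof -
  obtain i' where i': "i = Suc i'" using i by (cases i) auto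
  have c: "a \<in> carrier G" "b \<in> carrier G" using g unfolding abgood_def by auto
  have d: "inv a \<noteq> inv (inv a)" "inv a \<noteq> inv (inv b)" "inv b \<noteq> inv (inv a)" using g c unfolding abgood_def by auto
  have s0: "successively (\<lambda>x y. y \<noteq> inv x) (replicate (Suc i') (inv a))"
    by (rule succ_rep) (use d in auto)
  have s1: "successively (\<lambda>x y. y \<noteq> inv x) (inv b # replicate (Suc i') (inv a))"
    using s0 d by (simp only: successively_Cons) simp
  have e: "Vd a b i @ Vd a b i = inv b # (replicate (Suc i') (inv a) @ inv b # replicate (Suc i') (inv a))"
    unfolding Vd_def i' by simp
  have s2: "successively (\<lambda>x y. y \<noteq> inv x) (replicate (Suc i') (inv a) @ inv b # replicate (Suc i') (inv a))"
    by (rule succ_rep_cons) (use d s1 in auto)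
  have "successively (\<lambda>x y. y \<noteq> inv x) (Vd a b i @ Vd a b i)"
    unfolding e using s2 d by (simp only: successively_Cons) simp
  moreover have "set (Vd a b i @ Vd a b i) \<subseteq> {a, inv a, b, inv b}" unfolding Vd_def by auto
  ultimately show ?thesis unfolding red_def by simp
qed

lemma wprod_Vd:
  assumes c: "a \<in> carrier G" "b \<in> carrier G"
  shows "wprod (Vd a b i) = inv (wprod (Wd a b i))"
proof -
  have "wprod (Wd a b i) = a [^] i \<otimes> b"
  proof -
    have "set (replicate i a) \<subseteq> carrier G" using c by auto
    then show ?thesis unfolding Wd_def using c wprod_append[of "replicate i a" "[b]"] wprod_replicate[of a i] by simp
  qed
  moreover have "wprod (Vd a b i) = inv b \<otimes> inv a [^] i"
    unfolding Vd_def using c wprod_replicate[of "inv a" i] by simp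
  ultimately show ?thesis using c by (simp add: inv_mult_group nat_pow_inv)
qed

lemma Wd_carrier: "a \<in> carrier G \<Longrightarrow> b \<in> carrier G \<Longrightarrow> set (Wd a b i) \<subseteq> carrier G"
  unfolding Wd_def by auto

lemma inv_sfun:
  assumes c: "a \<in> carrier G" "b \<in> carrier G"
  shows "inv (sfun a b i n) = wprod (Vd a b i) [^] n"
  unfolding sfun_def wprod_Vd[OF c] using Wd_carrier[OF c] by (simp add: nat_pow_inv)

lemma crossA:
  assumes g: "abgood a b A B" and i: "1 \<le> i" "i < j" and n: "n \<ge> 1"
    and lm: "\<forall>z\<in>{a, inv a, b, inv b}. dist p (\<phi> z p) \<le> Lm"
  shows "gp (\<phi> (sfun a b i n) p) (\<phi> (sfun a b j n) p) p \<le> real i * Lm + B + 2 * \<delta>"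
proof -
  have c: "a \<in> carrier G" "b \<in> carrier G" and al: "alph {a, inv a, b, inv b} A B" and ba: "b \<noteq> a"
    using g unfolding abgood_def by auto
  obtain n' where n': "n = Suc n'" using n by (cases n) auto
  obtain k where "j = Suc (i + k)" using i(2) less_iff_Suc_add by blast
  then have k: "j = i + Suc k" by simp
  have e1: "concat (replicate n (Wd a b i)) = replicate i a @ b # concat (replicate n' (Wd a b i))"
    unfolding n' Wd_def by simp
  have e2: "concat (replicate n (Wd a b j)) = replicate i a @ a # (replicate k a @ b # concat (replicate n' (Wd a b j)))"
    unfolding n' Wd_def k replicate_add by simp
  have ne: "Wd a b i \<noteq> []" "Wd a b j \<noteq> []" unfolding Wd_def by auto
  have r1: "red {a, inv a, b, inv b} (concat (replicate n (Wd a b i)))"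
    by (rule red_concat_rep[OF Wd_red[OF g i(1)] ne(1)])
  have r2: "red {a, inv a, b, inv b} (concat (replicate n (Wd a b j)))"
    by (rule red_concat_rep[OF Wd_red[OF g] ne(2)]) (use i in auto)
  have "gp (\<phi> (wprod (replicate i a @ b # concat (replicate n' (Wd a b i)))) p)
           (\<phi> (wprod (replicate i a @ a # (replicate k a @ b # concat (replicate n' (Wd a b j))))) p) p
        \<le> real (length (replicate i a)) * Lm + B + 2 * \<delta>"
    by (rule word_branch[OF al lm]) (use r1 r2 e1 e2 ba in auto)
  then show ?thesis unfolding e1[symmetric] e2[symmetric] sfun_def
    using wprod_concat_rep[OF Wd_carrier[OF c]] by simp
qed

lemma crossB:
  assumes g: "abgood a b A B" and i: "1 \<le> i" "i < j" and n: "n \<ge> 2"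
    and lm: "\<forall>z\<in>{a, inv a, b, inv b}. dist p (\<phi> z p) \<le> Lm"
  shows "gp (\<phi> (inv (sfun a b i n)) p) (\<phi> (inv (sfun a b j n)) p) p \<le> real (Suc i) * Lm + B + 2 * \<delta>"
proof -
  have c: "a \<in> carrier G" "b \<in> carrier G" and al: "alph {a, inv a, b, inv b} A B" and ba: "inv b \<noteq> inv a"
    using g unfolding abgood_def by auto
  obtain n' where "n = 2 + n'" using le_Suc_ex[OF n] by blast
  then have n': "n = Suc (Suc n')" by simp
  obtain k where "j = Suc (i + k)" using i(2) less_iff_Suc_add by blast
  then have k: "j = i + Suc k" by simp
  have e1: "concat (replicate n (Vd a b i)) = (inv b # replicate i (inv a)) @ inv b # (replicate i (inv a) @ concat (replicate n' (Vd a b i)))"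
    unfolding n' Vd_def by simp
  have e2: "concat (replicate n (Vd a b j)) = (inv b # replicate i (inv a)) @ inv a # (replicate k (inv a) @ concat (replicate (Suc n') (Vd a b j)))"
    unfolding n' Vd_def k replicate_add by simp
  have ne: "Vd a b i \<noteq> []" "Vd a b j \<noteq> []" unfolding Vd_def by auto
  have r1: "red {a, inv a, b, inv b} (concat (replicate n (Vd a b i)))"
    by (rule red_concat_rep[OF Vd_red[OF g i(1)] ne(1)])
  have r2: "red {a, inv a, b, inv b} (concat (replicate n (Vd a b j)))"
    by (rule red_concat_rep[OF Vd_red[OF g] ne(2)]) (use i in auto)
  have "gp (\<phi> (wprod ((inv b # replicate i (inv a)) @ inv b # (replicate i (inv a) @ concat (replicate n' (Vd a b i))))) p)
           (\<phi> (wprod ((inv b # replicate i (inv a)) @ inv a # (replicate k (inv a) @ concat (replicate (Suc n') (Vd a b j))))) p) p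
        \<le> real (length (inv b # replicate i (inv a))) * Lm + B + 2 * \<delta>"
    by (rule word_branch[OF al lm]) (use r1 r2 e1 e2 ba in auto)
  moreover have "set (Vd a b i) \<subseteq> carrier G" "set (Vd a b j) \<subseteq> carrier G" using c unfolding Vd_def by auto
  ultimately show ?thesis unfolding e1[symmetric] e2[symmetric] inv_sfun[OF c]
    using wprod_concat_rep by simp
qed

lemma s_props:
  assumes g: "abgood a b A B" and i: "i \<ge> 1" and n: "n \<ge> 1"
  shows "sfun a b i n \<in> carrier G"
    and "loxodromic G \<phi> p (sfun a b i n)"
    and "dist p (\<phi> (sfun a b i n) p) \<ge> real n * (A - 2 * B - 2 * \<delta>)"
    and "gromov_seq p (\<lambda>k::nat. \<phi> (sfun a b i n [^] k) p)"
    and "\<forall>k::nat\<ge>1. gp (\<phi> (sfun a b i n [^] k) p) (\<phi> (sfun a b i n) p) p \<ge> dist p (\<phi> (sfun a b i n) p) - (B + 2 * \<delta>)"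
proof -
  have c: "a \<in> carrier G" "b \<in> carrier G" and al: "alph {a, inv a, b, inv b} A B"
    using g unfolding abgood_def by auto
  have r: "red {a, inv a, b, inv b} (Wd a b i @ Wd a b i)" by (rule Wd_red[OF g i])
  have ne: "Wd a b i \<noteq> []" unfolding Wd_def by auto
  define z where "z = wprod (Wd a b i)"
  have zc: "z \<in> carrier G" unfolding z_def using Wd_carrier[OF c] by simp
  have sz: "sfun a b i n = z [^] n" unfolding sfun_def z_def ..
  have pk: "sfun a b i n [^] k = z [^] (n * k)" for k :: nat unfolding sz using zc by (simp add: nat_pow_pow)
  show "sfun a b i n \<in> carrier G" unfolding sz using zc by simp
  show "loxodromic G \<phi> p (sfun a b i n)" unfolding sfun_def by (rule pw_lox[OF al r ne n])
  show "dist p (\<phi> (sfun a b i n) p) \<ge> real n * (A - 2 * B - 2 * \<delta>)"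
    unfolding sz z_def by (rule pw_dist[OF al r ne])
  have P1: "gp (\<phi> (z [^] (n * k)) p) (\<phi> (z [^] (n * k')) p) p \<ge> dist p (\<phi> (z [^] (n * k)) p) - (B + 2 * \<delta>)"
    if "k \<le> k'" for k k' :: nat
    using pw_P1[OF al r ne, of "n * k" "n * k'"] that unfolding z_def by simp
  have lo: "dist p (\<phi> (z [^] (n * k)) p) \<ge> real k * (A - 2 * B - 2 * \<delta>)" for k :: nat
  proof -
    have "dist p (\<phi> (z [^] (n * k)) p) \<ge> real (n * k) * (A - 2 * B - 2 * \<delta>)"
      unfolding z_def by (rule pw_dist[OF al r ne])
    moreover have "real k * (A - 2 * B - 2 * \<delta>) \<le> real (n * k) * (A - 2 * B - 2 * \<delta>)"
    proof (rule mult_right_mono)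
      have "k \<le> n * k" using n by simp
      then show "real k \<le> real (n * k)" by (simp only: of_nat_le_iff)
    qed (use pw_gamma[OF al] in auto)
    ultimately show ?thesis by simp
  qed
  show "gromov_seq p (\<lambda>k::nat. \<phi> (sfun a b i n [^] k) p)" unfolding pk
    by (rule gseq_lemma[OF P1 lo pw_gamma[OF al]])
  show "\<forall>k::nat\<ge>1. gp (\<phi> (sfun a b i n [^] k) p) (\<phi> (sfun a b i n) p) p \<ge> dist p (\<phi> (sfun a b i n) p) - (B + 2 * \<delta>)"
  proof (intro allI impI)
    fix k :: nat assume k: "k \<ge> 1"
    have "gp (\<phi> (z [^] (n * 1)) p) (\<phi> (z [^] (n * k)) p) p \<ge> dist p (\<phi> (z [^] (n * 1)) p) - (B + 2 * \<delta>)"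
      using P1[of 1 k] k by simp
    then show "gp (\<phi> (sfun a b i n [^] k) p) (\<phi> (sfun a b i n) p) p \<ge> dist p (\<phi> (sfun a b i n) p) - (B + 2 * \<delta>)"
      unfolding pk unfolding sz by (simp add: gp_sym)
  qed
qed

end

context hypact begin

lemma main_construct:
  assumes g: "abgood a b A B"
  shows "\<forall>\<epsilon>::real. 0 < \<epsilon> \<and> \<epsilon> < 1 \<longrightarrow> (\<exists>C::real. \<forall>D::real. \<exists>S.
           S \<noteq> {} \<and> schottky G \<phi> p \<epsilon> C D S \<and>
           (\<forall>s\<in>S. loxodromic G \<phi> p s) \<and>
           (\<forall>s\<in>S. \<forall>t\<in>S. s \<noteq> t \<longrightarrow> V_set p C (attr_fix G \<phi> p s) \<inter> V_set p C (attr_fix G \<phi> p t) = {}) \<and>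
           (\<forall>s\<in>S. \<phi> s p \<in> V_set p (C + \<delta>) (attr_fix G \<phi> p s)))"
proof (intro allI impI)
  fix \<epsilon> :: real assume e: "0 < \<epsilon> \<and> \<epsilon> < 1"
  have c: "a \<in> carrier G" "b \<in> carrier G" and al: "alph {a, inv a, b, inv b} A B"
    using g unfolding abgood_def by auto
  have B0: "B \<ge> 0" using alph_AB[OF al] by simp
  define N where "N = nat \<lceil>2 / \<epsilon>\<rceil>"
  have N2: "real N \<ge> 2 / \<epsilon>" unfolding N_def by (rule real_nat_ceiling_ge)
  have N1: "N \<ge> 1"
  proof -
    have "2 / \<epsilon> > 0" using e by simp
    then show ?thesis using N2 by (cases N) auto
  qed
  have eN: "\<epsilon> * real N \<ge> 2" using N2 e by (simp add: field_simps)
  define Lm where "Lm = max (dist p (\<phi> a p)) (dist p (\<phi> b p))"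
  have lm: "\<forall>z\<in>{a, inv a, b, inv b}. dist p (\<phi> z p) \<le> Lm" unfolding Lm_def using dist_inv c by auto
  have Lm0: "Lm \<ge> 0" unfolding Lm_def using zero_le_dist[of p "\<phi> a p"] by (simp add: le_max_iff_disj)
  define B' where "B' = real (Suc N) * Lm + B + 2 * \<delta>"
  define C where "C = B' + 3 * \<delta> + 1"
  show "\<exists>C::real. \<forall>D::real. \<exists>S.
           S \<noteq> {} \<and> schottky G \<phi> p \<epsilon> C D S \<and>
           (\<forall>s\<in>S. loxodromic G \<phi> p s) \<and>
           (\<forall>s\<in>S. \<forall>t\<in>S. s \<noteq> t \<longrightarrow> V_set p C (attr_fix G \<phi> p s) \<inter> V_set p C (attr_fix G \<phi> p t) = {}) \<and>
           (\<forall>s\<in>S. \<phi> s p \<in> V_set p (C + \<delta>) (attr_fix G \<phi> p s))"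
  proof (intro exI[of _ C] allI)
    fix D :: real
    define \<gamma> where "\<gamma> = A - 2 * B - 2 * \<delta>"
    have gp0: "\<gamma> > 0" unfolding \<gamma>_def by (rule pw_gamma[OF al])
    define T where "T = \<bar>D\<bar> + C + B' + B + 4 * \<delta> + 2"
    obtain n0 :: nat where n0: "real n0 > T / \<gamma>" using reals_Archimedean2 by blast
    define n where "n = max n0 2"
    have n2: "n \<ge> 2" "n \<ge> 1" unfolding n_def by auto
    have nT: "real n * \<gamma> > T"
    proof -
      have "real n \<ge> real n0" unfolding n_def by simp
      then have "real n > T / \<gamma>" using n0 by linarith
      then show ?thesis using gp0 by (simp add: field_simps)
    qed
    define s where "s i = sfun a b i n" for i
    have sp: "s i \<in> carrier G" "loxodromic G \<phi> p (s i)" "dist p (\<phi> (s i) p) > T"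
      "gromov_seq p (\<lambda>k::nat. \<phi> (s i [^] k) p)"
      "\<forall>k::nat\<ge>1. gp (\<phi> (s i [^] k) p) (\<phi> (s i) p) p \<ge> dist p (\<phi> (s i) p) - (B + 2 * \<delta>)"
      if i: "i \<ge> 1" for i
    proof -
      note sp = s_props[OF g i n2(2)]
      show "s i \<in> carrier G" "loxodromic G \<phi> p (s i)" "gromov_seq p (\<lambda>k::nat. \<phi> (s i [^] k) p)"
        "\<forall>k::nat\<ge>1. gp (\<phi> (s i [^] k) p) (\<phi> (s i) p) p \<ge> dist p (\<phi> (s i) p) - (B + 2 * \<delta>)"
        unfolding s_def using sp by auto
      show "dist p (\<phi> (s i) p) > T" unfolding s_def using sp(3) nT unfolding \<gamma>_def by linarith
    qed
    have TB: "T \<ge> B'" "T \<ge> C + B' + \<delta> + 1" "T \<ge> \<bar>D\<bar>" "T - (B + 2 * \<delta>) \<ge> C + \<delta>"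
      unfolding T_def C_def using delta_nonneg B0 Lm0 by (auto simp: B'_def)
    have crA: "gp (\<phi> (s i) p) (\<phi> (s j) p) p \<le> B' \<and> gp (\<phi> (inv (s i)) p) (\<phi> (inv (s j)) p) p \<le> B'"
      if ij: "i \<in> {1..N}" "j \<in> {1..N}" "i < j" for i j
    proof
      have "gp (\<phi> (s i) p) (\<phi> (s j) p) p \<le> real i * Lm + B + 2 * \<delta>"
        unfolding s_def by (rule crossA[OF g _ ij(3) n2(2) lm]) (use ij in auto)
      moreover have "real i * Lm \<le> real (Suc N) * Lm" using ij Lm0 by (intro mult_right_mono) auto
      ultimately show "gp (\<phi> (s i) p) (\<phi> (s j) p) p \<le> B'" unfolding B'_def by linarith
      have "gp (\<phi> (inv (s i)) p) (\<phi> (inv (s j)) p) p \<le> real (Suc i) * Lm + B + 2 * \<delta>"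
        unfolding s_def by (rule crossB[OF g _ ij(3) n2(1) lm]) (use ij in auto)
      moreover have "real (Suc i) * Lm \<le> real (Suc N) * Lm" using ij Lm0 by (intro mult_right_mono) auto
      ultimately show "gp (\<phi> (inv (s i)) p) (\<phi> (inv (s j)) p) p \<le> B'" unfolding B'_def by linarith
    qed
    have cr: "gp (\<phi> (s i) p) (\<phi> (s j) p) p \<le> B' \<and> gp (\<phi> (inv (s i)) p) (\<phi> (inv (s j)) p) p \<le> B'"
      if ij: "i \<in> {1..N}" "j \<in> {1..N}" "i \<noteq> j" for i j
    proof (cases "i < j")
      case True then show ?thesis using crA ij by blast
    next
      case False
      then have "j < i" using ij by simp
      then show ?thesis using crA[of j i] ij by (simp add: gp_sym)
    qed
    have inj: "inj_on s {1..N}"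
    proof (rule inj_onI, rule ccontr)
      fix i j assume ij: "i \<in> {1..N}" "j \<in> {1..N}" "s i = s j" "i \<noteq> j"
      have "gp (\<phi> (s i) p) (\<phi> (s j) p) p \<le> B'" using cr[OF ij(1,2,4)] by simp
      moreover have "gp (\<phi> (s i) p) (\<phi> (s j) p) p = dist p (\<phi> (s i) p)" using ij(3) by (simp add: gp_same dist_commute)
      moreover have "dist p (\<phi> (s i) p) > T" using sp(3) ij by auto
      ultimately show False using TB by linarith
    qed
    define S where "S = s ` {1..N}"
    have cardS: "card S = N" unfolding S_def using card_image[OF inj] by simp
    have finS: "finite S" unfolding S_def by simp
    have Sne: "S \<noteq> {}" unfolding S_def using N1 by auto
    have Sc: "S \<subseteq> carrier G" unfolding S_def using sp(1) by auto
    have Tr: "\<forall>u\<in>S. \<forall>v\<in>S. u \<noteq> v \<longrightarrow> gp (\<phi> u p) (\<phi> v p) p \<le> B' \<and> gp (\<phi> (inv u) p) (\<phi> (inv v) p) p \<le> B'"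
      unfolding S_def using cr by blast
    have Sl: "\<forall>u\<in>S. dist p (\<phi> u p) > T" unfolding S_def using sp(3) by auto
    have sch: "schottky G \<phi> p \<epsilon> C D S"
    proof (rule schottky_from[OF finS Sc Tr])
      show "\<forall>u\<in>S. dist p (\<phi> u p) \<ge> C + B' + \<delta> + 1" using Sl TB by force
      show "\<forall>u\<in>S. dist p (\<phi> u p) \<ge> D" using Sl TB by force
      show "C \<ge> B' + 2 * \<delta> + 1" unfolding C_def using delta_nonneg by simp
      show "\<epsilon> * real (card S) \<ge> 2" using eN cardS by simp
    qed
    have nearC: "\<forall>m::nat\<ge>1. gp (\<phi> (u [^] m) p) (\<phi> u p) p \<ge> C + \<delta>" if u: "u \<in> S" for u
    proof -
      obtain i where i: "i \<in> {1..N}" "u = s i" using u unfolding S_def by auto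
      show ?thesis using sp(5)[of i] sp(3)[of i] i TB by fastforce
    qed
    have lox: "\<forall>u\<in>S. loxodromic G \<phi> p u" unfolding S_def using sp(2) by auto
    have gs: "gromov_seq p (\<lambda>k::nat. \<phi> (u [^] k) p)" if "u \<in> S" for u
      using that sp(4) unfolding S_def by auto
    have disj: "\<forall>u\<in>S. \<forall>v\<in>S. u \<noteq> v \<longrightarrow> V_set p C (attr_fix G \<phi> p u) \<inter> V_set p C (attr_fix G \<phi> p v) = {}"
    proof (intro ballI impI)
      fix u v assume uv: "u \<in> S" "v \<in> S" "u \<noteq> v"
      show "V_set p C (attr_fix G \<phi> p u) \<inter> V_set p C (attr_fix G \<phi> p v) = {}"
      proof (rule ccontr)
        assume "V_set p C (attr_fix G \<phi> p u) \<inter> V_set p C (attr_fix G \<phi> p v) \<noteq> {}"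
        then obtain x where x: "x \<in> V_set p C (attr_fix G \<phi> p u)" "x \<in> V_set p C (attr_fix G \<phi> p v)" by blast
        have nu: "\<forall>m\<ge>1. gp (\<phi> (u [^] (m::nat)) p) (\<phi> u p) p \<ge> C" using nearC[OF uv(1)] delta_nonneg by force
        have nv: "\<forall>m\<ge>1. gp (\<phi> (v [^] (m::nat)) p) (\<phi> v p) p \<ge> C" using nearC[OF uv(2)] delta_nonneg by force
        have xu: "gp x (\<phi> u p) p \<ge> C - 1/4 - 2 * \<delta>"
          by (rule V_near[OF _ nu]) (use x(1) in \<open>simp add: attr_fix_def\<close>)
        have xv: "gp x (\<phi> v p) p \<ge> C - 1/4 - 2 * \<delta>"
          by (rule V_near[OF _ nv]) (use x(2) in \<open>simp add: attr_fix_def\<close>)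
        have h: "gp (\<phi> u p) (\<phi> v p) p \<ge> min (gp (\<phi> u p) x p) (gp x (\<phi> v p) p) - \<delta>" by (rule hyp4)
        have "gp (\<phi> u p) (\<phi> v p) p \<le> B'" using Tr uv by blast
        then show False using h xu xv unfolding C_def by (simp add: gp_sym min_def split: if_splits)
      qed
    qed
    have self: "\<forall>u\<in>S. \<phi> u p \<in> V_set p (C + \<delta>) (attr_fix G \<phi> p u)"
    proof
      fix u assume u: "u \<in> S"
      have "\<forall>m\<ge>1. gp (\<phi> u p) (\<phi> (u [^] (m::nat)) p) p \<ge> C + \<delta>" using nearC[OF u] by (simp add: gp_sym)
      from V_self[OF gs[OF u] this] show "\<phi> u p \<in> V_set p (C + \<delta>) (attr_fix G \<phi> p u)"
        by (simp add: attr_fix_def)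
    qed
    show "\<exists>S. S \<noteq> {} \<and> schottky G \<phi> p \<epsilon> C D S \<and> (\<forall>s\<in>S. loxodromic G \<phi> p s) \<and>
           (\<forall>s\<in>S. \<forall>t\<in>S. s \<noteq> t \<longrightarrow> V_set p C (attr_fix G \<phi> p s) \<inter> V_set p C (attr_fix G \<phi> p t) = {}) \<and>
           (\<forall>s\<in>S. \<phi> s p \<in> V_set p (C + \<delta>) (attr_fix G \<phi> p s))"
      using Sne sch lox disj self by blast
  qed
qed

lemma main:
  assumes ne: "non_elementary G \<phi> p"
  shows "\<forall>\<epsilon>::real. 0 < \<epsilon> \<and> \<epsilon> < 1 \<longrightarrow> (\<exists>C::real. \<forall>D::real. \<exists>S.
           S \<noteq> {} \<and> schottky G \<phi> p \<epsilon> C D S \<and>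
           (\<forall>s\<in>S. loxodromic G \<phi> p s) \<and>
           (\<forall>s\<in>S. \<forall>t\<in>S. s \<noteq> t \<longrightarrow> V_set p C (attr_fix G \<phi> p s) \<inter> V_set p C (attr_fix G \<phi> p t) = {}) \<and>
           (\<forall>s\<in>S. \<phi> s p \<in> V_set p (C + \<delta>) (attr_fix G \<phi> p s)))"
proof -
  obtain a b A B where "a \<in> carrier G \<and> b \<in> carrier G \<and> alph {a, inv a, b, inv b} A B \<and>
     a \<noteq> inv a \<and> b \<noteq> inv a \<and> a \<noteq> inv b \<and> b \<noteq> a \<and> inv b \<noteq> inv a"
    using ab_exists[OF ne] by blast
  then have "abgood a b A B" unfolding abgood_def by blast
  then show ?thesis by (rule main_construct)
qed

end

theorem lemma5p4:
  fixes G :: "('g, 'b) monoid_scheme" and \<phi> :: "'g \<Rightarrow> 'a::metric_space \<Rightarrow> 'a"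
    and p :: 'a and \<delta> :: real
  assumes "geodesic_space TYPE('a)"
    and "gromov_hyperbolic TYPE('a) \<delta>"
    and "isometric_action G \<phi>"
    and "non_elementary G \<phi> p"
  shows "\<forall>\<epsilon>::real. 0 < \<epsilon> \<and> \<epsilon> < 1 \<longrightarrow> (\<exists>C::real. \<forall>D::real. \<exists>S.
           S \<noteq> {} \<and> schottky G \<phi> p \<epsilon> C D S \<and>
           (\<forall>s\<in>S. loxodromic G \<phi> p s) \<and>
           (\<forall>s\<in>S. \<forall>t\<in>S. s \<noteq> t \<longrightarrow> V_set p C (attr_fix G \<phi> p s) \<inter> V_set p C (attr_fix G \<phi> p t) = {}) \<and>
           (\<forall>s\<in>S. \<phi> s p \<in> V_set p (C + \<delta>) (attr_fix G \<phi> p s)))"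
proof -
  have gr: "group G" using assms(3) unfolding isometric_action_def by simp
  interpret H: hypact G \<phi> p \<delta>
    by (intro hypact.intro hypact_axioms.intro gr assms(2) assms(3))
  show ?thesis by (rule H.main[OF assms(4)])
qed


end
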